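(* Assume (A1) $\frac1n\sum_{a,i}y_{ai}^4<C_1$ and $\frac1n\sum_{s,i}x_{si}^4<C_1$ for all $n$; (A2) $\frac1n\mathbf{x}'\mathbf{x}\to\mathbf{M}$ positive definite; (A5) the diagonal entries of $\mathbf{m}\pi$ lie in $(c,C)$, $0<c<C<\infty$, for all $n$. Let $\hat b_n=(\mathbf{x}'\mathbf{m}\mathbf{R}\mathbf{x})^{+}\mathbf{x}'\mathbf{m}\mathbf{R}y$ and $b_n=(\mathbf{x}'\mathbf{m}\pi\mathbf{x})^{+}\mathbf{x}'\mathbf{m}\pi y$. If $|||\mathbf{D}|||_2/n\to0$, then $$\hat b_n-b_n=O_p\Big(\sqrt{|||\mathbf{D}|||_2/n}\Big).$$ If instead of (A1) one assumes (A1$'$) $\max_i|y_{ai}|$ and $\max_i|x_{si}|$ are bounded by a constant uniformly in $a,s,n$, and $\frac1n\|\mathbf{D}\|_1/n\to0$, then $\hat b_n-b_n=O_p\big(\sqrt{\tfrac1n\|\mathbf{D}\|_1/n}\big)$.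
   Context: Setup: $k$ arms and $p$ covariates fixed, $n\to\infty$ along a sequence of finite populations with randomized designs; randomness only from assignment. $\mathbf{R}$ is the $kn\times kn$ diagonal matrix of assignment indicators $\mathbf{R}_{ai}\in\{0,1\}$ (ordered arm by arm, one arm per unit), $\pi=\mathrm{E}[\mathbf{R}]$ with entries in $(0,1)$, $1_{kn}$ all-ones, $\mathbf{D}=\mathrm{Var}(\pi^{-1}\mathbf{R}1_{kn})$; $|||\cdot|||_2$ spectral norm; $\|\mathbf{D}\|_1=\sum_{r,s}|\mathbf{D}_{rs}|$. $y\in\mathbb{R}^{kn}$ stacks potential outcomes $y_{ai}$; $X\in\mathbb{R}^{n\times p}$ has entries $x_{is}$ (written $x_{si}$); $\mathbf{1}=I_k\otimes1_n$; $\mathbf{x}=[\mathbf{1}\mid1_k\otimes X]$; $\mathbf{m}$ diagonal with positive diagonal; $A^+$ Moore–Penrose inverse. *)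

theory Defs
  imports "Jordan_Normal_Form.Matrix" "HOL-Probability.Probability_Mass_Function"
begin

text \<open>There are k arms, p covariates and a sequence of finite populations
indexed by nu, population nu having size N nu.  A (randomized) design is a probability
mass function on assignments z, where z i is the arm (in 0..k-1) of unit i (i < N nu).
Vectors/matrices of length kn are ordered arm by arm: row index a * n + i.\<close>

definition vnorm :: "real Matrix.vec \<Rightarrow> real" where
  "vnorm v = sqrt (\<Sum>i<dim_vec v. (v $ i)^2)"

definition spec_norm :: "real Matrix.mat \<Rightarrow> real" where
  "spec_norm A = Sup {vnorm (A *\<^sub>v v) | v. v \<in> carrier_vec (dim_col A) \<and> vnorm v \<le> 1}"

definition l1_norm :: "real Matrix.mat \<Rightarrow> real" where
  "l1_norm A = (\<Sum>r<dim_row A. \<Sum>s<dim_col A. \<bar>A $$ (r,s)\<bar>)"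

definition mp_inverse :: "real Matrix.mat \<Rightarrow> real mat" where
  "mp_inverse A = (THE B. B \<in> carrier_mat (dim_col A) (dim_row A) \<and>
      A * B * A = A \<and> B * A * B = B \<and>
      transpose_mat (A * B) = A * B \<and> transpose_mat (B * A) = B * A)"

definition pos_def_mat :: "real Matrix.mat \<Rightarrow> bool" where
  "pos_def_mat M \<longleftrightarrow> (\<exists>d. M \<in> carrier_mat d d) \<and> transpose_mat M = M \<and>
     (\<forall>v \<in> carrier_vec (dim_row M). v \<noteq> 0\<^sub>v (dim_row M) \<longrightarrow> Matrix.scalar_prod v (M *\<^sub>v v) > 0)"

definition diag_kn :: "nat \<Rightarrow> nat \<Rightarrow> (nat \<Rightarrow> nat \<Rightarrow> real) \<Rightarrow> real mat" where
  "diag_kn k n f = Matrix.mat (k*n) (k*n) (\<lambda>(r,s). if r = s then f (r div n) (r mod n) else 0)"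

definition vec_kn :: "nat \<Rightarrow> nat \<Rightarrow> (nat \<Rightarrow> nat \<Rightarrow> real) \<Rightarrow> real Matrix.vec" where
  "vec_kn k n f = Matrix.vec (k*n) (\<lambda>r. f (r div n) (r mod n))"

text \<open>Design matrix x = [I_k \<otimes> 1_n | 1_k \<otimes> X], of size kn x (k+p); X i s = x_{si}.\<close>
definition design_x :: "nat \<Rightarrow> nat \<Rightarrow> nat \<Rightarrow> (nat \<Rightarrow> nat \<Rightarrow> real) \<Rightarrow> real mat" where
  "design_x k p n X = Matrix.mat (k*n) (k+p) (\<lambda>(r,c).
      if c < k then (if r div n = c then 1 else 0) else X (r mod n) (c - k))"

definition Rind :: "(nat \<Rightarrow> nat) \<Rightarrow> nat \<Rightarrow> nat \<Rightarrow> real" where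
  "Rind z a i = (if z i = a then 1 else 0)"

definition piP :: "(nat \<Rightarrow> nat) pmf \<Rightarrow> nat \<Rightarrow> nat \<Rightarrow> real" where
  "piP P a i = measure_pmf.expectation P (\<lambda>z. Rind z a i)"

text \<open>D = Var(pi^{-1} R 1_{kn}) (covariance matrix of the vector with entries R_{ai}/pi_{ai}).\<close>
definition Dmat :: "nat \<Rightarrow> nat \<Rightarrow> (nat \<Rightarrow> nat) pmf \<Rightarrow> real mat" where
  "Dmat k n P = Matrix.mat (k*n) (k*n) (\<lambda>(r,s).
     let w = (\<lambda>t z. Rind z (t div n) (t mod n) / piP P (t div n) (t mod n)) in
     measure_pmf.expectation P (\<lambda>z. (w r z - measure_pmf.expectation P (w r)) *
                                    (w s z - measure_pmf.expectation P (w s))))"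

definition bhat :: "nat \<Rightarrow> nat \<Rightarrow> nat \<Rightarrow> (nat \<Rightarrow> nat \<Rightarrow> real) \<Rightarrow> (nat \<Rightarrow> nat \<Rightarrow> real)
    \<Rightarrow> (nat \<Rightarrow> nat \<Rightarrow> real) \<Rightarrow> (nat \<Rightarrow> nat) \<Rightarrow> real Matrix.vec" where
  "bhat k p n y X m z =
     (let x = design_x k p n X; W = diag_kn k n m * diag_kn k n (Rind z) in
      mp_inverse (transpose_mat x * W * x) *\<^sub>v (transpose_mat x * W *\<^sub>v vec_kn k n y))"

definition btarget :: "nat \<Rightarrow> nat \<Rightarrow> nat \<Rightarrow> (nat \<Rightarrow> nat \<Rightarrow> real) \<Rightarrow> (nat \<Rightarrow> nat \<Rightarrow> real)
    \<Rightarrow> (nat \<Rightarrow> nat \<Rightarrow> real) \<Rightarrow> (nat \<Rightarrow> nat) pmf \<Rightarrow> real Matrix.vec" where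
  "btarget k p n y X m P =
     (let x = design_x k p n X; W = diag_kn k n m * diag_kn k n (piP P) in
      mp_inverse (transpose_mat x * W * x) *\<^sub>v (transpose_mat x * W *\<^sub>v vec_kn k n y))"

definition bigO_p :: "(nat \<Rightarrow> 'z pmf) \<Rightarrow> (nat \<Rightarrow> 'z \<Rightarrow> real Matrix.vec) \<Rightarrow> (nat \<Rightarrow> real) \<Rightarrow> bool" where
  "bigO_p P Xs r \<longleftrightarrow> (\<forall>\<epsilon>>0. \<exists>B. \<exists>N0. \<forall>\<nu>\<ge>N0.
      measure_pmf.prob (P \<nu>) {z. vnorm (Xs \<nu> z) > B * r \<nu>} < \<epsilon>)"

end

theory Submission
  imports Defs "Jordan_Normal_Form.Determinant"
begin

lemma sum_lessThan_add_nat: "(\<Sum>t<m+(q::nat). f t) = (\<Sum>t<m. f t) + (\<Sum>i<q. f (m+i))"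
  by (induction q) (auto simp: algebra_simps)

lemma sum_kn: "(\<Sum>t<(k::nat)*n. g (t div n) (t mod n)) = (\<Sum>a<k. \<Sum>i<n. (g a i :: real))"
proof (induction k)
  case 0 then show ?case by simp
next
  case (Suc k)
  have e: "Suc k * n = k*n + n" by simp
  have "(\<Sum>t<Suc k*n. g (t div n) (t mod n)) = (\<Sum>t<k*n + n. g (t div n) (t mod n))"
    by (simp only: e)
  also have "\<dots> = (\<Sum>t<k*n. g (t div n) (t mod n)) + (\<Sum>i<n. g ((k*n+i) div n) ((k*n+i) mod n))"
    by (rule sum_lessThan_add_nat)
  also have "(\<Sum>i<n. g ((k*n+i) div n) ((k*n+i) mod n)) = (\<Sum>i<n. g k i)"
    by (rule sum.cong) auto
  finally show ?case using Suc by simp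
qed

definition xe :: "nat \<Rightarrow> nat \<Rightarrow> (nat \<Rightarrow> nat \<Rightarrow> real) \<Rightarrow> nat \<Rightarrow> nat \<Rightarrow> real" where
  "xe k n X r t = (if r < k then (if t div n = r then 1 else 0) else X (t mod n) (r - k))"

lemma design_x_idx: "t < k*n \<Longrightarrow> r < k+p \<Longrightarrow> design_x k p n X $$ (t,r) = xe k n X r t"
  "dim_row (design_x k p n X) = k*n" "dim_col (design_x k p n X) = k+p"
  by (auto simp: design_x_def xe_def)

lemma diag_kn_idx: "r < k*n \<Longrightarrow> s < k*n \<Longrightarrow> diag_kn k n f $$ (r,s) = (if r = s then f (r div n) (r mod n) else 0)"
  "dim_row (diag_kn k n f) = k*n" "dim_col (diag_kn k n f) = k*n"
  by (auto simp: diag_kn_def)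

lemma diag_mult: "diag_kn k n f * diag_kn k n g = diag_kn k n (\<lambda>a i. f a i * g a i)"
proof (rule eq_matI)
  fix r s assume r: "r < dim_row (diag_kn k n (\<lambda>a i. f a i * g a i))" and s: "s < dim_col (diag_kn k n (\<lambda>a i. f a i * g a i))"
  then have rs: "r < k*n" "s < k*n" by (auto simp: diag_kn_idx)
  have "(diag_kn k n f * diag_kn k n g) $$ (r,s) = (\<Sum>j\<in>{0..<k*n}. diag_kn k n f $$ (r,j) * diag_kn k n g $$ (j,s))"
    using rs by (simp add: diag_kn_idx scalar_prod_def)
  also have "\<dots> = (\<Sum>j\<in>{0..<k*n}. if j = r then (if r = s then f (r div n) (r mod n) * g (r div n) (r mod n) else 0) else 0)"
    using rs by (intro sum.cong) (auto simp: diag_kn_idx)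
  also have "\<dots> = diag_kn k n (\<lambda>a i. f a i * g a i) $$ (r,s)"
    using rs by (simp add: diag_kn_idx)
  finally show "(diag_kn k n f * diag_kn k n g) $$ (r,s) = diag_kn k n (\<lambda>a i. f a i * g a i) $$ (r,s)" .
qed (auto simp: diag_kn_idx)

lemma xtw: "transpose_mat (design_x k p n X) * diag_kn k n w =
   Matrix.mat (k+p) (k*n) (\<lambda>(r,t). xe k n X r t * w (t div n) (t mod n))"
proof (rule eq_matI)
  fix r t assume "r < dim_row (Matrix.mat (k+p) (k*n) (\<lambda>(r,t). xe k n X r t * w (t div n) (t mod n)))"
    "t < dim_col (Matrix.mat (k+p) (k*n) (\<lambda>(r,t). xe k n X r t * w (t div n) (t mod n)))"
  then have rt: "r < k+p" "t < k*n" by auto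
  have "(transpose_mat (design_x k p n X) * diag_kn k n w) $$ (r,t) = (\<Sum>j\<in>{0..<k*n}. xe k n X r j * diag_kn k n w $$ (j,t))"
    using rt by (simp add: diag_kn_idx design_x_idx scalar_prod_def)
  also have "\<dots> = (\<Sum>j\<in>{0..<k*n}. if j = t then xe k n X r t * w (t div n) (t mod n) else 0)"
    using rt by (intro sum.cong) (auto simp: diag_kn_idx)
  also have "\<dots> = xe k n X r t * w (t div n) (t mod n)" using rt by simp
  finally show "(transpose_mat (design_x k p n X) * diag_kn k n w) $$ (r,t) = Matrix.mat (k+p) (k*n) (\<lambda>(r,t). xe k n X r t * w (t div n) (t mod n)) $$ (r,t)"
    using rt by simp
qed (auto simp: diag_kn_idx design_x_idx)

lemma G_idx: "r < k+p \<Longrightarrow> s < k+p \<Longrightarrow>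
  (transpose_mat (design_x k p n X) * diag_kn k n w * design_x k p n X) $$ (r,s)
   = (\<Sum>t<k*n. xe k n X r t * w (t div n) (t mod n) * xe k n X s t)"
  unfolding xtw
  apply (subst index_mult_mat(1))
    apply simp
   apply (simp add: design_x_idx)
  apply (simp only: scalar_prod_def lessThan_atLeast0)
  apply (rule sum.cong)
   apply (simp add: design_x_idx)
  apply (simp add: design_x_idx)
  done

lemma G_dim: "transpose_mat (design_x k p n X) * diag_kn k n w * design_x k p n X \<in> carrier_mat (k+p) (k+p)"
  apply (rule carrier_matI)
   apply (simp only: index_mult_mat index_transpose_mat design_x_idx)
  apply (simp only: index_mult_mat index_transpose_mat design_x_idx)
  done

lemma h_idx: "r < k+p \<Longrightarrow>
  vec_index (transpose_mat (design_x k p n X) * diag_kn k n w *\<^sub>v vec_kn k n y) r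
   = (\<Sum>t<k*n. xe k n X r t * w (t div n) (t mod n) * y (t div n) (t mod n))"
  unfolding xtw
  apply (subst index_mult_mat_vec)
   apply simp
  apply (simp only: scalar_prod_def vec_kn_def dim_vec index_vec lessThan_atLeast0)
  apply (rule sum.cong)
   apply simp
  apply simp
  done

lemma h_dim: "transpose_mat (design_x k p n X) * diag_kn k n w *\<^sub>v vec_kn k n y \<in> carrier_vec (k+p)"
  apply (rule carrier_vecI)
  apply (simp only: dim_mult_mat_vec index_mult_mat index_transpose_mat design_x_idx)
  done

definition qf :: "nat \<Rightarrow> (nat \<Rightarrow> nat \<Rightarrow> real) \<Rightarrow> (nat \<Rightarrow> real) \<Rightarrow> real" where
  "qf d A f = (\<Sum>r<d. \<Sum>s<d. f r * A r s * f s)"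

definition nsq :: "nat \<Rightarrow> (nat \<Rightarrow> real) \<Rightarrow> real" where
  "nsq d f = (\<Sum>r<d. (f r)^2)"

lemma nsq_nonneg: "nsq d f \<ge> 0"
  unfolding nsq_def by (rule sum_nonneg) simp

lemma CS1: "(\<Sum>r<d. \<bar>f r\<bar>)^2 \<le> real d * nsq d f"
proof -
  have "(\<Sum>r<d. 1 * \<bar>f r\<bar>)^2 \<le> (\<Sum>r<d. (1::real)^2) * (\<Sum>r<d. \<bar>f r\<bar>^2)"
    by (rule Cauchy_Schwarz_ineq_sum)
  then show ?thesis by (simp add: nsq_def)
qed

lemma CS1': "(\<Sum>r<d. \<bar>f r\<bar>) \<le> sqrt (real d) * sqrt (nsq d f)"
proof -
  have "(\<Sum>r<d. \<bar>f r\<bar>) = sqrt ((\<Sum>r<d. \<bar>f r\<bar>)^2)"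
    by (simp add: sum_nonneg)
  also have "\<dots> \<le> sqrt (real d * nsq d f)" using CS1 real_sqrt_le_mono by blast
  finally show ?thesis by (simp add: real_sqrt_mult)
qed

lemma CS2: "(\<Sum>r<d. f r * g r) \<le> sqrt (nsq d f) * sqrt (nsq d g)"
proof -
  have "(\<Sum>r<d. f r * g r)^2 \<le> nsq d f * nsq d g"
    unfolding nsq_def by (rule Cauchy_Schwarz_ineq_sum)
  then have "sqrt ((\<Sum>r<d. f r * g r)^2) \<le> sqrt (nsq d f * nsq d g)" using real_sqrt_le_mono by blast
  then have "\<bar>\<Sum>r<d. f r * g r\<bar> \<le> sqrt (nsq d f) * sqrt (nsq d g)" by (simp add: real_sqrt_mult)
  then show ?thesis by linarith
qed

lemma sq_sum_prod: "(\<Sum>r<d. (a r::real))^2 = (\<Sum>r<d. \<Sum>s<d. a r * a s)"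
  by (simp add: power2_eq_square sum_product)

lemma qf_diff:
  assumes "\<forall>r<d. \<forall>s<d. \<bar>A r s - B r s\<bar> \<le> \<eta>"
  shows "\<bar>qf d A f - qf d B f\<bar> \<le> \<eta> * (\<Sum>r<d. \<bar>f r\<bar>)^2"
proof -
  have "qf d A f - qf d B f = (\<Sum>r<d. \<Sum>s<d. f r * (A r s - B r s) * f s)"
    unfolding qf_def sum_subtractf[symmetric] by (intro sum.cong refl) (simp add: right_diff_distrib left_diff_distrib)
  also have "\<bar>\<dots>\<bar> \<le> (\<Sum>r<d. \<bar>\<Sum>s<d. f r * (A r s - B r s) * f s\<bar>)" by (rule sum_abs)
  also have "\<dots> \<le> (\<Sum>r<d. \<Sum>s<d. \<eta> * (\<bar>f r\<bar> * \<bar>f s\<bar>))"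
  proof (rule sum_mono)
    fix r assume r: "r \<in> {..<d}"
    have "\<bar>\<Sum>s<d. f r * (A r s - B r s) * f s\<bar> \<le> (\<Sum>s<d. \<bar>f r * (A r s - B r s) * f s\<bar>)" by (rule sum_abs)
    also have "\<dots> \<le> (\<Sum>s<d. \<eta> * (\<bar>f r\<bar> * \<bar>f s\<bar>))"
    proof (rule sum_mono)
      fix s assume s: "s \<in> {..<d}"
      have "\<bar>A r s - B r s\<bar> \<le> \<eta>" using assms r s by auto
      then have "\<bar>A r s - B r s\<bar> * (\<bar>f r\<bar> * \<bar>f s\<bar>) \<le> \<eta> * (\<bar>f r\<bar> * \<bar>f s\<bar>)"
        by (rule mult_right_mono) simp
      moreover have "\<bar>f r * (A r s - B r s) * f s\<bar> = \<bar>A r s - B r s\<bar> * (\<bar>f r\<bar> * \<bar>f s\<bar>)"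
        by (simp only: abs_mult ac_simps)
      ultimately show "\<bar>f r * (A r s - B r s) * f s\<bar> \<le> \<eta> * (\<bar>f r\<bar> * \<bar>f s\<bar>)"
        by simp
    qed
    finally show "\<bar>\<Sum>s<d. f r * (A r s - B r s) * f s\<bar> \<le> (\<Sum>s<d. \<eta> * (\<bar>f r\<bar> * \<bar>f s\<bar>))" .
  qed
  also have "\<dots> = \<eta> * (\<Sum>r<d. \<bar>f r\<bar>)^2"
    by (simp add: sq_sum_prod sum_distrib_left)
  finally show ?thesis .
qed

lemma qf_ge:
  assumes "\<forall>r<d. \<forall>s<d. \<bar>A r s - B r s\<bar> \<le> \<eta>" "\<eta> \<ge> 0"
  shows "qf d A f \<ge> qf d B f - \<eta> * real d * nsq d f"
proof -
  have "\<bar>qf d A f - qf d B f\<bar> \<le> \<eta> * (\<Sum>r<d. \<bar>f r\<bar>)^2" by (rule qf_diff[OF assms(1)])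
  also have "\<dots> \<le> \<eta> * (real d * nsq d f)" using CS1[where f=f and d=d] assms(2) by (rule mult_left_mono)
  finally show ?thesis by auto
qed

lemma qf_sol: "(\<forall>r<d. (\<Sum>s<d. A r s * b s) = h r) \<Longrightarrow> qf d A b = (\<Sum>r<d. b r * h r)"
proof -
  assume H: "\<forall>r<d. (\<Sum>s<d. A r s * b s) = h r"
  have "qf d A b = (\<Sum>r<d. b r * (\<Sum>s<d. A r s * b s))"
    unfolding qf_def by (intro sum.cong refl) (simp add: sum_distrib_left mult.assoc)
  also have "\<dots> = (\<Sum>r<d. b r * h r)" using H by (intro sum.cong refl) simp
  finally show ?thesis .
qed

lemma core_det:
  fixes A0 A1 :: "nat \<Rightarrow> nat \<Rightarrow> real" and h0 h1 b0 b1 :: "nat \<Rightarrow> real"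
  assumes sol0: "\<forall>r<d. (\<Sum>s<d. A0 r s * b0 s) = h0 r"
    and sol1: "\<forall>r<d. (\<Sum>s<d. A1 r s * b1 s) = h1 r"
    and pd0: "\<forall>f. qf d A0 f \<ge> \<kappa> * nsq d f" and kp: "\<kappa> > 0"
    and eA: "\<forall>r<d. \<forall>s<d. \<bar>A1 r s - A0 r s\<bar> \<le> \<eta>" and eh: "\<forall>r<d. \<bar>h1 r - h0 r\<bar> \<le> \<eta>"
    and eta: "\<eta> \<ge> 0" and small: "real d * \<eta> \<le> \<kappa>/2"
    and hb: "\<forall>r<d. \<bar>h0 r\<bar> \<le> H" and H: "H \<ge> 0"
  shows "sqrt (nsq d (\<lambda>s. b1 s - b0 s)) \<le> 2 * \<eta> * (1 + real d * H / \<kappa>) * sqrt (real d) / \<kappa>"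
proof -
  define S0 where "S0 = (\<Sum>s<d. \<bar>b0 s\<bar>)"
  define e where "e = (\<lambda>s. b1 s - b0 s)"
  define E where "E = sqrt (nsq d e)"
  have S0nn: "S0 \<ge> 0" unfolding S0_def by (rule sum_nonneg) simp
  have "\<kappa> * nsq d b0 \<le> qf d A0 b0" using pd0 by auto
  also have "\<dots> = (\<Sum>r<d. b0 r * h0 r)" by (rule qf_sol[OF sol0])
  also have "\<dots> \<le> (\<Sum>r<d. \<bar>b0 r\<bar> * H)"
  proof (rule sum_mono)
    fix r assume "r \<in> {..<d}"
    then have "\<bar>h0 r\<bar> \<le> H" using hb by auto
    then have "\<bar>b0 r\<bar> * \<bar>h0 r\<bar> \<le> \<bar>b0 r\<bar> * H" by (rule mult_left_mono) simp
    moreover have "b0 r * h0 r \<le> \<bar>b0 r\<bar> * \<bar>h0 r\<bar>"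
      by (simp only: abs_mult[symmetric] abs_ge_self)
    ultimately show "b0 r * h0 r \<le> \<bar>b0 r\<bar> * H" by linarith
  qed
  also have "\<dots> = H * S0" unfolding S0_def by (simp add: sum_distrib_left mult.commute)
  finally have k1: "\<kappa> * nsq d b0 \<le> H * S0" .
  have "\<kappa> * S0^2 \<le> \<kappa> * (real d * nsq d b0)" using CS1[where f=b0 and d=d] kp unfolding S0_def by simp
  also have "\<dots> = real d * (\<kappa> * nsq d b0)" by simp
  also have "\<dots> \<le> real d * (H * S0)" using k1 by (simp add: mult_left_mono)
  finally have k2: "\<kappa> * S0^2 \<le> real d * H * S0" by simp
  have S0b: "S0 \<le> real d * H / \<kappa>"
  proof (cases "S0 = 0")
    case True then show ?thesis using kp H by simp
  next
    case False
    then have "S0 > 0" using S0nn by simp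
    then have "\<kappa> * S0 \<le> real d * H" using k2 by (simp add: power2_eq_square)
    then show ?thesis using kp by (simp add: field_simps)
  qed
  define f where "f = (\<lambda>r. \<Sum>s<d. A1 r s * e s)"
  have fr: "\<bar>f r\<bar> \<le> \<eta> * (1 + S0)" if r: "r < d" for r
  proof -
    have "f r = (\<Sum>s<d. A1 r s * b1 s) - (\<Sum>s<d. A0 r s * b0 s) - (\<Sum>s<d. (A1 r s - A0 r s) * b0 s)"
      unfolding f_def e_def sum_subtractf[symmetric] by (intro sum.cong refl) (simp add: right_diff_distrib left_diff_distrib)
    also have "\<dots> = (h1 r - h0 r) - (\<Sum>s<d. (A1 r s - A0 r s) * b0 s)" using sol0 sol1 r by simp
    finally have fe: "f r = (h1 r - h0 r) - (\<Sum>s<d. (A1 r s - A0 r s) * b0 s)" .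
    have "\<bar>\<Sum>s<d. (A1 r s - A0 r s) * b0 s\<bar> \<le> (\<Sum>s<d. \<bar>(A1 r s - A0 r s) * b0 s\<bar>)" by (rule sum_abs)
    also have "\<dots> \<le> (\<Sum>s<d. \<eta> * \<bar>b0 s\<bar>)"
    proof (rule sum_mono)
      fix s assume "s \<in> {..<d}"
      then have "\<bar>A1 r s - A0 r s\<bar> \<le> \<eta>" using eA r by auto
      then show "\<bar>(A1 r s - A0 r s) * b0 s\<bar> \<le> \<eta> * \<bar>b0 s\<bar>"
        by (simp add: abs_mult mult_right_mono)
    qed
    also have "\<dots> = \<eta> * S0" unfolding S0_def by (simp add: sum_distrib_left)
    finally have "\<bar>\<Sum>s<d. (A1 r s - A0 r s) * b0 s\<bar> \<le> \<eta> * S0" .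
    moreover have "\<bar>h1 r - h0 r\<bar> \<le> \<eta>" using eh r by auto
    ultimately show ?thesis unfolding fe by (simp add: algebra_simps)
  qed
  have "qf d A1 e = (\<Sum>r<d. e r * f r)"
    by (rule qf_sol) (simp add: f_def)
  also have "\<dots> \<le> (\<Sum>r<d. \<bar>e r\<bar> * (\<eta> * (1 + S0)))"
  proof (rule sum_mono)
    fix r assume "r \<in> {..<d}"
    then have "\<bar>f r\<bar> \<le> \<eta> * (1 + S0)" using fr by auto
    then have "\<bar>e r\<bar> * \<bar>f r\<bar> \<le> \<bar>e r\<bar> * (\<eta> * (1 + S0))" by (rule mult_left_mono) simp
    moreover have "e r * f r \<le> \<bar>e r\<bar> * \<bar>f r\<bar>" by (simp add: abs_mult[symmetric])
    ultimately show "e r * f r \<le> \<bar>e r\<bar> * (\<eta> * (1 + S0))" by linarith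
  qed
  also have "\<dots> = \<eta> * (1 + S0) * (\<Sum>r<d. \<bar>e r\<bar>)" by (subst sum_distrib_right[symmetric]) (rule mult.commute)
  also have "\<dots> \<le> \<eta> * (1 + S0) * (sqrt (real d) * E)"
    unfolding E_def using eta S0nn by (intro mult_left_mono CS1') auto
  finally have up: "qf d A1 e \<le> \<eta> * (1 + S0) * (sqrt (real d) * E)" .
  have "qf d A1 e \<ge> qf d A0 e - \<eta> * real d * nsq d e" by (rule qf_ge[OF eA eta])
  moreover have "qf d A0 e \<ge> \<kappa> * nsq d e" using pd0 by auto
  moreover have "\<eta> * real d * nsq d e \<le> \<kappa>/2 * nsq d e"
  proof -
    have "(real d * \<eta>) * nsq d e \<le> (\<kappa>/2) * nsq d e" by (rule mult_right_mono[OF small nsq_nonneg])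
    then show ?thesis by (simp add: algebra_simps)
  qed
  moreover have E2: "E^2 = nsq d e" unfolding E_def by (rule real_sqrt_pow2[OF nsq_nonneg])
  ultimately have low: "qf d A1 e \<ge> \<kappa>/2 * E^2" by simp
  have Enn: "E \<ge> 0" unfolding E_def by (simp add: nsq_nonneg)
  have EE: "E \<le> 2 * \<eta> * (1 + S0) * sqrt (real d) / \<kappa>"
  proof (cases "E = 0")
    case True then show ?thesis using eta S0nn kp by simp
  next
    case False
    then have Ep: "E > 0" using Enn by simp
    have "\<kappa>/2 * E * E \<le> \<eta> * (1 + S0) * sqrt (real d) * E" using low up by (simp add: power2_eq_square algebra_simps)
    then have "\<kappa>/2 * E \<le> \<eta> * (1 + S0) * sqrt (real d)" using Ep by simp
    then show ?thesis using kp by (simp add: field_simps)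
  qed
  also have "\<dots> \<le> 2 * \<eta> * (1 + real d * H / \<kappa>) * sqrt (real d) / \<kappa>"
    using S0b eta kp by (intro divide_right_mono mult_right_mono mult_left_mono) auto
  finally show ?thesis unfolding E_def e_def .
qed

lemma mv_idx: "G \<in> carrier_mat d d \<Longrightarrow> v \<in> carrier_vec d \<Longrightarrow> r < d \<Longrightarrow>
   vec_index (G *\<^sub>v v) r = (\<Sum>s<d. G $$ (r,s) * vec_index v s)"
  by (simp add: scalar_prod_def lessThan_atLeast0 mult.commute)

lemma mp_inv_eq:
  fixes A B :: "real Matrix.mat"
  assumes A: "A \<in> carrier_mat d d" and B: "B \<in> carrier_mat d d"
    and AB: "A * B = 1\<^sub>m d" and BA: "B * A = 1\<^sub>m d"
  shows "mp_inverse A = B"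
  unfolding mp_inverse_def
proof (rule the_equality)
  show "B \<in> carrier_mat (dim_col A) (dim_row A) \<and> A * B * A = A \<and> B * A * B = B \<and>
      transpose_mat (A * B) = A * B \<and> transpose_mat (B * A) = B * A"
    using A B AB BA by (simp add: left_mult_one_mat right_mult_one_mat)
next
  fix B' assume H: "B' \<in> carrier_mat (dim_col A) (dim_row A) \<and> A * B' * A = A \<and> B' * A * B' = B' \<and>
      transpose_mat (A * B') = A * B' \<and> transpose_mat (B' * A) = B' * A"
  then have B': "B' \<in> carrier_mat d d" and e: "A * B' * A = A" using A by auto
  have "B = B * A * B" using BA B by (simp add: left_mult_one_mat)
  also have "\<dots> = B * (A * B' * A) * B" using e by simp
  also have "\<dots> = (B * A) * B' * (A * B)"
    using A B B' by (simp add: assoc_mult_mat[of _ d d _ d _ d])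
  also have "\<dots> = B'" using AB BA B' by (simp add: left_mult_one_mat right_mult_one_mat)
  finally show "B' = B" by simp
qed

lemma inv_exists:
  fixes A :: "real Matrix.mat"
  assumes A: "A \<in> carrier_mat d d" and inj: "\<forall>v\<in>carrier_vec d. A *\<^sub>v v = 0\<^sub>v d \<longrightarrow> v = 0\<^sub>v d"
  shows "\<exists>B. B \<in> carrier_mat d d \<and> A * B = 1\<^sub>m d \<and> B * A = 1\<^sub>m d"
proof -
  have "det A \<noteq> 0" using det_0_iff_vec_prod_zero[OF A] inj by auto
  then have "A \<in> Units (ring_mat TYPE(real) d ())" by (rule det_non_zero_imp_unit[OF A])
  then show ?thesis unfolding Units_def ring_mat_def by auto
qed

lemma solve:
  fixes G :: "real Matrix.mat"
  assumes G: "G \<in> carrier_mat d d" and h: "h \<in> carrier_vec d"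
    and inj: "\<forall>v\<in>carrier_vec d. G *\<^sub>v v = 0\<^sub>v d \<longrightarrow> v = 0\<^sub>v d"
  shows "mp_inverse G *\<^sub>v h \<in> carrier_vec d \<and> G *\<^sub>v (mp_inverse G *\<^sub>v h) = h"
proof -
  obtain B where B: "B \<in> carrier_mat d d" "G * B = 1\<^sub>m d" "B * G = 1\<^sub>m d" using inv_exists[OF G inj] by auto
  have "mp_inverse G = B" by (rule mp_inv_eq[OF G B])
  moreover have "G *\<^sub>v (B *\<^sub>v h) = h"
  proof -
    have "G *\<^sub>v (B *\<^sub>v h) = (G * B) *\<^sub>v h" by (rule assoc_mult_mat_vec[OF G B(1) h, symmetric])
    then show ?thesis using B(2) h by simp
  qed
  ultimately show ?thesis using B h by simp
qed

lemma inj_of_qf: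
  fixes G :: "real Matrix.mat"
  assumes G: "G \<in> carrier_mat d d" and kp: "\<kappa> > 0"
    and q: "\<forall>f. qf d (\<lambda>r s. G $$ (r,s)) f \<ge> \<kappa> * nsq d f"
  shows "\<forall>v\<in>carrier_vec d. G *\<^sub>v v = 0\<^sub>v d \<longrightarrow> v = 0\<^sub>v d"
proof (intro ballI impI)
  fix v :: "real Matrix.vec" assume v: "v \<in> carrier_vec d" and z: "G *\<^sub>v v = 0\<^sub>v d"
  have "\<forall>r<d. (\<Sum>s<d. G $$ (r,s) * vec_index v s) = 0"
  proof (intro allI impI)
    fix r assume r: "r < d"
    have "vec_index (G *\<^sub>v v) r = 0" using z r by simp
    then show "(\<Sum>s<d. G $$ (r,s) * vec_index v s) = 0" using mv_idx[OF G v r] by simp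
  qed
  then have "qf d (\<lambda>r s. G $$ (r,s)) (vec_index v) = (\<Sum>r<d. vec_index v r * 0)"
    by (intro qf_sol) auto
  then have q0: "qf d (\<lambda>r s. G $$ (r,s)) (vec_index v) = 0" by simp
  have "\<kappa> * nsq d (vec_index v) \<le> 0" using q[rule_format, of "vec_index v"] unfolding q0 .
  then have "nsq d (vec_index v) \<le> 0" using kp by (simp add: mult_le_0_iff)
  then have "nsq d (vec_index v) = 0" using nsq_nonneg by (metis order_antisym)
  then have "\<forall>r\<in>{..<d}. (vec_index v r)^2 = 0" unfolding nsq_def
    by (subst sum_nonneg_eq_0_iff[symmetric]) auto
  then show "v = 0\<^sub>v d" using v by (intro eq_vecI) auto
qed

lemma intb: fixes f :: "'a \<Rightarrow> real" assumes "\<forall>z. \<bar>f z\<bar> \<le> B" shows "integrable (measure_pmf Q) f"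
  by (rule measure_pmf.integrable_const_bound[where B=B]) (use assms in auto)

lemma sq_le_of_abs: fixes x b :: real shows "\<bar>x\<bar> \<le> b \<Longrightarrow> x^2 \<le> b^2"
  by (metis abs_ge_zero abs_le_square_iff abs_of_nonneg order_trans)

lemma cheb:
  fixes Z :: "'a \<Rightarrow> real"
  assumes bd: "\<forall>z. \<bar>Z z\<bar> \<le> Bd" and v: "measure_pmf.expectation Q (\<lambda>z. (Z z)^2) \<le> K * \<delta>"
    and dl: "\<delta> \<ge> 0" and tau: "\<tau> > 0" and K: "K \<ge> 0"
  shows "measure_pmf.prob Q {z. \<bar>Z z\<bar> > \<tau> * sqrt \<delta>} \<le> K / \<tau>^2"
proof -
  have int: "integrable (measure_pmf Q) (\<lambda>z. (Z z)^2)"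
  proof (rule intb[where B="Bd^2"], intro allI)
    fix z have "(Z z)^2 \<le> Bd^2" using bd sq_le_of_abs by blast
    then show "\<bar>(Z z)^2\<bar> \<le> Bd^2" by simp
  qed
  show ?thesis
  proof (cases "\<delta> = 0")
    case False
    then have dp: "\<delta> > 0" using dl by simp
    have cp: "\<tau>^2 * \<delta> > 0" using dp tau by simp
    have sub: "{z. \<bar>Z z\<bar> > \<tau> * sqrt \<delta>} \<subseteq> {z \<in> space (measure_pmf Q). \<tau>^2 * \<delta> \<le> (Z z)^2}"
    proof
      fix z assume "z \<in> {z. \<bar>Z z\<bar> > \<tau> * sqrt \<delta>}"
      then have lt: "\<tau> * sqrt \<delta> < \<bar>Z z\<bar>" by simp
      have "(\<tau> * sqrt \<delta>)^2 < \<bar>Z z\<bar>^2" by (rule power_strict_mono[OF lt]) (use tau dl in auto)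
      then show "z \<in> {z \<in> space (measure_pmf Q). \<tau>^2 * \<delta> \<le> (Z z)^2}" using dl by (simp add: power_mult_distrib)
    qed
    have "measure_pmf.prob Q {z. \<bar>Z z\<bar> > \<tau> * sqrt \<delta>} \<le> measure_pmf.prob Q {z \<in> space (measure_pmf Q). \<tau>^2 * \<delta> \<le> (Z z)^2}"
      by (rule measure_pmf.finite_measure_mono[OF sub]) simp
    also have "\<dots> \<le> measure_pmf.expectation Q (\<lambda>z. (Z z)^2) / (\<tau>^2 * \<delta>)"
      by (rule integral_Markov_inequality_measure[OF int _ _ cp, where A=UNIV]) auto
    also have "\<dots> \<le> K * \<delta> / (\<tau>^2 * \<delta>)" by (rule divide_right_mono[OF v]) (use cp in simp)
    also have "\<dots> = K / \<tau>^2" using dp by simp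
    finally show ?thesis .
  next
    case True
    have e0: "measure_pmf.expectation Q (\<lambda>z. (Z z)^2) \<ge> 0" by (rule integral_nonneg_AE) simp
    have "measure_pmf.expectation Q (\<lambda>z. (Z z)^2) \<le> 0" using v True by simp
    then have "measure_pmf.expectation Q (\<lambda>z. (Z z)^2) = 0" using e0 by linarith
    then have "AE z in measure_pmf Q. (Z z)^2 = 0" using integral_nonneg_eq_0_iff_AE[OF int] by simp
    then have "\<forall>y\<in>set_pmf Q. (Z y)^2 = 0" by (simp add: AE_measure_pmf_iff)
    then have "set_pmf Q \<inter> {z. \<bar>Z z\<bar> > \<tau> * sqrt \<delta>} = {}" using True by auto
    then have "measure_pmf.prob Q {z. \<bar>Z z\<bar> > \<tau> * sqrt \<delta>} = 0" using measure_pmf_zero_iff by blast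
    then show ?thesis using K by simp
  qed
qed

lemma Rind01: "Rind z a i = 0 \<or> Rind z a i = 1"
  unfolding Rind_def by auto

lemma Dmat_idx: "t < k*n \<Longrightarrow> t' < k*n \<Longrightarrow> Dmat k n Q $$ (t,t') =
  measure_pmf.expectation Q (\<lambda>z. (Rind z (t div n) (t mod n) / piP Q (t div n) (t mod n)
      - measure_pmf.expectation Q (\<lambda>z. Rind z (t div n) (t mod n) / piP Q (t div n) (t mod n))) *
    (Rind z (t' div n) (t' mod n) / piP Q (t' div n) (t' mod n)
      - measure_pmf.expectation Q (\<lambda>z. Rind z (t' div n) (t' mod n) / piP Q (t' div n) (t' mod n))))"
  unfolding Dmat_def by (simp add: Let_def)

lemma var_formula:
  fixes Q :: "(nat \<Rightarrow> nat) pmf" and u :: "nat \<Rightarrow> real"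
  assumes pos: "\<forall>t<k*n. piP Q (t div n) (t mod n) > 0"
  shows "measure_pmf.expectation Q (\<lambda>z. (\<Sum>t<k*n. u t * (Rind z (t div n) (t mod n) - piP Q (t div n) (t mod n)))^2)
    = (\<Sum>t<k*n. \<Sum>t'<k*n. (u t * piP Q (t div n) (t mod n)) * Dmat k n Q $$ (t,t') * (u t' * piP Q (t' div n) (t' mod n)))"
proof -
  define T where "T = k*n"
  define pp where "pp = (\<lambda>t. piP Q (t div n) (t mod n))"
  define w where "w = (\<lambda>t z. Rind z (t div n) (t mod n) / piP Q (t div n) (t mod n))"
  define ew where "ew = (\<lambda>t. measure_pmf.expectation Q (w t))"
  define v where "v = (\<lambda>t. u t * pp t)"
  define g where "g = (\<lambda>t z. w t z - ew t)"
  have intR: "integrable (measure_pmf Q) (\<lambda>z. Rind z a i)" for a i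
    by (rule intb[where B=1]) (metis Rind01 abs_zero abs_one order_refl zero_le_one)
  have ew1: "ew t = 1" if t: "t < T" for t
  proof -
    have "ew t = measure_pmf.expectation Q (\<lambda>z. Rind z (t div n) (t mod n)) / pp t"
      unfolding ew_def w_def pp_def by simp
    also have "\<dots> = pp t / pp t" unfolding pp_def piP_def ..
    also have "\<dots> = 1"
    proof -
      have "pp t > 0" using pos t unfolding T_def pp_def by blast
      then show ?thesis by simp
    qed
    finally show ?thesis .
  qed
  have gb: "\<bar>g t z\<bar> \<le> \<bar>1 / pp t\<bar> + \<bar>ew t\<bar>" for t z
  proof -
    have "\<bar>w t z\<bar> \<le> \<bar>1 / pp t\<bar>" unfolding w_def pp_def using Rind01[of z "t div n" "t mod n"] by auto
    then show ?thesis unfolding g_def by linarith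
  qed
  have intg: "integrable (measure_pmf Q) (\<lambda>z. g t z * g t' z)" for t t'
  proof (rule intb[where B="(\<bar>1 / pp t\<bar> + \<bar>ew t\<bar>) * (\<bar>1 / pp t'\<bar> + \<bar>ew t'\<bar>)"], intro allI)
    fix z show "\<bar>g t z * g t' z\<bar> \<le> (\<bar>1 / pp t\<bar> + \<bar>ew t\<bar>) * (\<bar>1 / pp t'\<bar> + \<bar>ew t'\<bar>)"
      unfolding abs_mult by (rule mult_mono[OF gb gb]) auto
  qed
  have intv: "integrable (measure_pmf Q) (\<lambda>z. c * (g t z * g t' z))" for c t t'
    using intg[of t t'] by simp
  have dif: "Rind z (t div n) (t mod n) - pp t = pp t * g t z" if t: "t < T" for t z
  proof -
    have "pp t > 0" using pos t unfolding T_def pp_def by simp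
    then show ?thesis unfolding g_def w_def ew1[OF t] pp_def by (simp add: field_simps)
  qed
  have eq1: "(\<lambda>z. (\<Sum>t<T. u t * (Rind z (t div n) (t mod n) - pp t))^2)
      = (\<lambda>z. \<Sum>t<T. \<Sum>t'<T. v t * v t' * (g t z * g t' z))"
  proof
    fix z
    have "(\<Sum>t<T. u t * (Rind z (t div n) (t mod n) - pp t)) = (\<Sum>t<T. v t * g t z)"
      by (intro sum.cong refl) (simp add: dif v_def)
    then have "(\<Sum>t<T. u t * (Rind z (t div n) (t mod n) - pp t))^2 = (\<Sum>t<T. \<Sum>t'<T. (v t * g t z) * (v t' * g t' z))"
      by (simp add: sq_sum_prod)
    also have "\<dots> = (\<Sum>t<T. \<Sum>t'<T. v t * v t' * (g t z * g t' z))"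
      by (intro sum.cong refl) (simp add: ac_simps)
    finally show "(\<Sum>t<T. u t * (Rind z (t div n) (t mod n) - pp t))^2 = (\<Sum>t<T. \<Sum>t'<T. v t * v t' * (g t z * g t' z))" .
  qed
  have "measure_pmf.expectation Q (\<lambda>z. (\<Sum>t<T. u t * (Rind z (t div n) (t mod n) - pp t))^2)
      = measure_pmf.expectation Q (\<lambda>z. \<Sum>t<T. \<Sum>t'<T. v t * v t' * (g t z * g t' z))"
    unfolding eq1 ..
  also have "\<dots> = (\<Sum>t<T. measure_pmf.expectation Q (\<lambda>z. \<Sum>t'<T. v t * v t' * (g t z * g t' z)))"
    by (subst Bochner_Integration.integral_sum) (auto intro!: integrable_sum intv simp: intg)
  also have "\<dots> = (\<Sum>t<T. \<Sum>t'<T. v t * v t' * measure_pmf.expectation Q (\<lambda>z. g t z * g t' z))"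
  proof (rule sum.cong[OF refl])
    fix t
    show "measure_pmf.expectation Q (\<lambda>z. \<Sum>t'<T. v t * v t' * (g t z * g t' z)) = (\<Sum>t'<T. v t * v t' * measure_pmf.expectation Q (\<lambda>z. g t z * g t' z))"
      by (subst Bochner_Integration.integral_sum) (auto intro!: integrable_sum intv simp: intg)
  qed
  also have "\<dots> = (\<Sum>t<T. \<Sum>t'<T. v t * Dmat k n Q $$ (t,t') * v t')"
  proof (intro sum.cong refl)
    fix t t' assume "t \<in> {..<T}" "t' \<in> {..<T}"
    then have "Dmat k n Q $$ (t,t') = measure_pmf.expectation Q (\<lambda>z. g t z * g t' z)"
      unfolding T_def g_def w_def ew_def by (simp add: Dmat_idx)
    then show "v t * v t' * measure_pmf.expectation Q (\<lambda>z. g t z * g t' z) = v t * Dmat k n Q $$ (t,t') * v t'"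
      by simp
  qed
  finally show ?thesis unfolding T_def v_def pp_def .
qed

lemma vnorm_nsq: "x \<in> carrier_vec T \<Longrightarrow> vnorm x = sqrt (nsq T (vec_index x))"
  unfolding vnorm_def nsq_def by simp

lemma frob:
  assumes D: "D \<in> carrier_mat T T" and x: "x \<in> carrier_vec T"
  shows "vnorm (D *\<^sub>v x) \<le> sqrt (\<Sum>r<T. \<Sum>s<T. (D $$ (r,s))^2) * vnorm x"
proof -
  have Dx: "D *\<^sub>v x \<in> carrier_vec T" using D x by simp
  have "nsq T (vec_index (D *\<^sub>v x)) \<le> (\<Sum>r<T. (\<Sum>s<T. (D $$ (r,s))^2) * nsq T (vec_index x))"
    unfolding nsq_def
  proof (rule sum_mono)
    fix r assume r: "r \<in> {..<T}"
    have "(vec_index (D *\<^sub>v x) r)^2 = (\<Sum>s<T. D $$ (r,s) * vec_index x s)^2" using mv_idx[OF D x] r by simp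
    also have "\<dots> \<le> (\<Sum>s<T. (D $$ (r,s))^2) * (\<Sum>s<T. (vec_index x s)^2)" by (rule Cauchy_Schwarz_ineq_sum)
    finally show "(vec_index (D *\<^sub>v x) r)^2 \<le> (\<Sum>s<T. (D $$ (r,s))^2) * (\<Sum>r<T. (vec_index x r)^2)" .
  qed
  also have "\<dots> = (\<Sum>r<T. \<Sum>s<T. (D $$ (r,s))^2) * nsq T (vec_index x)" by (simp add: sum_distrib_right)
  finally have "sqrt (nsq T (vec_index (D *\<^sub>v x))) \<le> sqrt ((\<Sum>r<T. \<Sum>s<T. (D $$ (r,s))^2) * nsq T (vec_index x))"
    using real_sqrt_le_mono by blast
  then show ?thesis unfolding vnorm_nsq[OF Dx] vnorm_nsq[OF x] by (simp add: real_sqrt_mult)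
qed

lemma vnorm_smult: "vnorm (c \<cdot>\<^sub>v x) = \<bar>c\<bar> * vnorm x"
proof -
  have "vnorm (c \<cdot>\<^sub>v x) = sqrt (c^2 * (\<Sum>i<dim_vec x. (vec_index x i)^2))"
    unfolding vnorm_def by (simp add: sum_distrib_left power_mult_distrib)
  then show ?thesis unfolding vnorm_def by (simp add: real_sqrt_mult)
qed

lemma spec_ok:
  assumes D: "D \<in> carrier_mat T T"
  shows "spec_norm D \<ge> 0" "\<And>x. x \<in> carrier_vec T \<Longrightarrow> vnorm (D *\<^sub>v x) \<le> spec_norm D * vnorm x"
proof -
  define S where "S = {vnorm (D *\<^sub>v v) | v. v \<in> carrier_vec (dim_col D) \<and> vnorm v \<le> 1}"
  define Fr where "Fr = sqrt (\<Sum>r<T. \<Sum>s<T. (D $$ (r,s))^2)"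
  have Fr0: "Fr \<ge> 0" unfolding Fr_def by (intro real_sqrt_ge_zero sum_nonneg) auto
  have dc: "dim_col D = T" using D by auto
  have bdd: "bdd_above S"
  proof (rule bdd_aboveI)
    fix a assume "a \<in> S"
    then obtain v where v: "v \<in> carrier_vec T" "vnorm v \<le> 1" "a = vnorm (D *\<^sub>v v)" unfolding S_def dc by auto
    have "a \<le> Fr * vnorm v" using frob[OF D v(1)] v(3) unfolding Fr_def by simp
    also have "\<dots> \<le> Fr * 1" by (rule mult_left_mono[OF v(2) Fr0])
    finally show "a \<le> Fr" by simp
  qed
  have sn: "spec_norm D = Sup S" unfolding spec_norm_def S_def ..
  have mem: "vnorm (D *\<^sub>v v) \<in> S" if "v \<in> carrier_vec T" "vnorm v \<le> 1" for v
    unfolding S_def dc using that by blast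
  have z: "vnorm (0\<^sub>v T) = 0" unfolding vnorm_def by simp
  have "vnorm (D *\<^sub>v 0\<^sub>v T) \<le> Fr * vnorm (0\<^sub>v T)" using frob[OF D, of "0\<^sub>v T"] unfolding Fr_def by simp
  moreover have "vnorm (D *\<^sub>v 0\<^sub>v T) \<ge> 0" unfolding vnorm_def by (simp add: sum_nonneg)
  ultimately have "vnorm (D *\<^sub>v 0\<^sub>v T) = 0" using z by simp
  then have "0 \<in> S" using mem[of "0\<^sub>v T"] z by simp
  then show s0: "spec_norm D \<ge> 0" unfolding sn using bdd by (rule cSup_upper)
  fix x :: "real Matrix.vec" assume x: "x \<in> carrier_vec T"
  show "vnorm (D *\<^sub>v x) \<le> spec_norm D * vnorm x"
  proof (cases "vnorm x = 0")
    case True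
    have "vnorm (D *\<^sub>v x) \<ge> 0" unfolding vnorm_def by (simp add: sum_nonneg)
    then show ?thesis using frob[OF D x] s0 True by simp
  next
    case False
    have vn0: "vnorm x \<ge> 0" unfolding vnorm_def by (simp add: sum_nonneg)
    then have vp: "vnorm x > 0" using False by simp
    define y where "y = (1 / vnorm x) \<cdot>\<^sub>v x"
    have y: "y \<in> carrier_vec T" unfolding y_def using x by simp
    have vy: "vnorm y = 1" unfolding y_def vnorm_smult using vp by simp
    have "D *\<^sub>v y = (1 / vnorm x) \<cdot>\<^sub>v (D *\<^sub>v x)" unfolding y_def by (rule mult_mat_vec[OF D x])
    then have e: "vnorm (D *\<^sub>v y) = vnorm (D *\<^sub>v x) / vnorm x" using vp by (simp add: vnorm_smult)
    have e2: "vnorm (D *\<^sub>v x) = vnorm x * vnorm (D *\<^sub>v y)" unfolding e using vp by simp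
    have "vnorm (D *\<^sub>v y) \<le> spec_norm D" unfolding sn using bdd mem[OF y] vy by (simp add: cSup_upper)
    then have "vnorm x * vnorm (D *\<^sub>v y) \<le> vnorm x * spec_norm D" using vn0 by (rule mult_left_mono)
    then show ?thesis unfolding e2 by (simp add: mult.commute)
  qed
qed

lemma spec_bound:
  assumes D: "D \<in> carrier_mat T T"
  shows "(\<Sum>t<T. \<Sum>t'<T. v t * D $$ (t,t') * v t') \<le> spec_norm D * nsq T v"
proof -
  define V where "V = Matrix.vec T v"
  have V: "V \<in> carrier_vec T" unfolding V_def by simp
  have DV: "D *\<^sub>v V \<in> carrier_vec T" using D V by simp
  have nV: "nsq T (vec_index V) = nsq T v" unfolding nsq_def V_def by (intro sum.cong refl) simp
  have "(\<Sum>t<T. \<Sum>t'<T. v t * D $$ (t,t') * v t') = (\<Sum>t<T. v t * vec_index (D *\<^sub>v V) t)"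
  proof (intro sum.cong refl)
    fix t assume t: "t \<in> {..<T}"
    have "vec_index (D *\<^sub>v V) t = (\<Sum>t'<T. D $$ (t,t') * vec_index V t')" using mv_idx[OF D V] t by simp
    also have "\<dots> = (\<Sum>t'<T. D $$ (t,t') * v t')" unfolding V_def by (intro sum.cong refl) simp
    finally show "(\<Sum>t'<T. v t * D $$ (t,t') * v t') = v t * vec_index (D *\<^sub>v V) t"
      by (simp add: sum_distrib_left mult.assoc)
  qed
  also have "\<dots> \<le> sqrt (nsq T v) * sqrt (nsq T (vec_index (D *\<^sub>v V)))" by (rule CS2)
  also have "\<dots> = vnorm V * vnorm (D *\<^sub>v V)" unfolding vnorm_nsq[OF V] vnorm_nsq[OF DV] nV ..
  also have "\<dots> \<le> vnorm V * (spec_norm D * vnorm V)"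
    by (rule mult_left_mono[OF spec_ok(2)[OF D V]]) (simp add: vnorm_def sum_nonneg)
  also have "\<dots> = spec_norm D * nsq T v" unfolding vnorm_nsq[OF V] nV using nsq_nonneg[of T v]
    by (simp add: ac_simps)
  finally show ?thesis .
qed

lemma l1_bound:
  assumes D: "D \<in> carrier_mat T T" and vb: "\<forall>t<T. \<bar>v t\<bar> \<le> F"
  shows "(\<Sum>t<T. \<Sum>t'<T. v t * D $$ (t,t') * v t') \<le> F^2 * l1_norm D"
proof -
  have dd: "dim_row D = T" "dim_col D = T" using D by auto
  have "(\<Sum>t<T. \<Sum>t'<T. v t * D $$ (t,t') * v t') \<le> (\<Sum>t<T. \<Sum>t'<T. F^2 * \<bar>D $$ (t,t')\<bar>)"
  proof (intro sum_mono)
    fix t t' assume t: "t \<in> {..<T}" and t': "t' \<in> {..<T}"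
    have a: "\<bar>v t\<bar> \<le> F" "\<bar>v t'\<bar> \<le> F" using vb t t' by auto
    have F0: "0 \<le> F" using a(1) abs_ge_zero order_trans by blast
    have "v t * D $$ (t,t') * v t' \<le> \<bar>v t\<bar> * \<bar>v t'\<bar> * \<bar>D $$ (t,t')\<bar>"
      by (simp add: abs_mult[symmetric] ac_simps)
    also have "\<dots> \<le> F * F * \<bar>D $$ (t,t')\<bar>"
      by (intro mult_right_mono mult_mono a) (auto simp: F0)
    finally show "v t * D $$ (t,t') * v t' \<le> F^2 * \<bar>D $$ (t,t')\<bar>" by (simp add: power2_eq_square)
  qed
  also have "\<dots> = F^2 * l1_norm D" unfolding l1_norm_def dd by (simp add: sum_distrib_left)
  finally show ?thesis .
qed

definition bil :: "nat \<Rightarrow> (nat \<Rightarrow> nat \<Rightarrow> real) \<Rightarrow> (nat \<Rightarrow> real) \<Rightarrow> (nat \<Rightarrow> real) \<Rightarrow> real" where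
  "bil d A g f = (\<Sum>r<d. \<Sum>s<d. g r * A r s * f s)"

lemma bil_sym: assumes sym: "\<forall>r<d. \<forall>s<d. A r s = A s r"
  shows "bil d A f g = bil d A g f"
proof -
  have "bil d A f g = (\<Sum>s<d. \<Sum>r<d. f r * A r s * g s)" unfolding bil_def by (rule sum.swap)
  also have "\<dots> = bil d A g f" unfolding bil_def
  proof (intro sum.cong refl)
    fix s r assume "s \<in> {..<d}" "r \<in> {..<d}"
    then show "f r * A r s * g s = g s * A s r * f r" using sym by simp
  qed
  finally show ?thesis .
qed

lemma qf_plus: "qf d A (\<lambda>r. g r + t * f r) = qf d A g + t * (bil d A g f + bil d A f g) + t^2 * qf d A f"
proof -
  have "qf d A (\<lambda>r. g r + t * f r) = (\<Sum>r<d. \<Sum>s<d. g r * A r s * g s + t * (g r * A r s * f s + f r * A r s * g s) + t^2 * (f r * A r s * f s))"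
    unfolding qf_def by (intro sum.cong refl) (simp add: algebra_simps power2_eq_square)
  also have "\<dots> = qf d A g + t * (bil d A g f + bil d A f g) + t^2 * qf d A f"
    unfolding qf_def bil_def by (simp add: sum.distrib sum_distrib_left distrib_left)
  finally show ?thesis .
qed

lemma psd_cs:
  assumes sym: "\<forall>r<d. \<forall>s<d. A r s = A s r" and psd: "\<forall>f. qf d A f \<ge> 0"
  shows "(bil d A g f)^2 \<le> qf d A g * qf d A f"
proof -
  define a where "a = qf d A g"
  define b where "b = bil d A g f"
  define c where "c = qf d A f"
  have q: "a + 2 * t * b + t^2 * c \<ge> 0" for t
  proof -
    have "0 \<le> qf d A (\<lambda>r. g r + t * f r)" using psd by blast
    also have "\<dots> = a + 2 * t * b + t^2 * c" unfolding qf_plus bil_sym[OF sym, of f g] a_def b_def c_def by simp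
    finally show ?thesis .
  qed
  have c0: "c \<ge> 0" unfolding c_def using psd by blast
  show ?thesis
  proof (cases "c = 0")
    case True
    have "b = 0"
    proof (rule ccontr)
      assume bn: "b \<noteq> 0"
      have "a + 2 * (-(a+1)/(2*b)) * b + (-(a+1)/(2*b))^2 * c \<ge> 0" by (rule q)
      then show False using bn True by (simp add: field_simps)
    qed
    then show ?thesis using True unfolding a_def b_def c_def by simp
  next
    case False
    then have cp: "c > 0" using c0 by simp
    have "a + 2 * (-b/c) * b + (-b/c)^2 * c \<ge> 0" by (rule q)
    then have "a - b^2 / c \<ge> 0" using cp by (simp add: power2_eq_square field_simps)
    then have "b^2 \<le> a * c" using cp by (simp add: field_simps)
    then show ?thesis unfolding a_def b_def c_def .
  qed
qed

lemma qf_vec: "M \<in> carrier_mat d d \<Longrightarrow>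
  qf d (\<lambda>r s. M $$ (r,s)) f = Matrix.scalar_prod (Matrix.vec d f) (M *\<^sub>v Matrix.vec d f)"
proof -
  assume M: "M \<in> carrier_mat d d"
  have V: "Matrix.vec d f \<in> carrier_vec d" by simp
  have dM: "dim_row M = d" using M by auto
  have "Matrix.scalar_prod (Matrix.vec d f) (M *\<^sub>v Matrix.vec d f) = (\<Sum>r\<in>{0..<d}. vec_index (Matrix.vec d f) r * vec_index (M *\<^sub>v Matrix.vec d f) r)"
    by (simp only: scalar_prod_def dim_mult_mat_vec dM)
  also have "\<dots> = (\<Sum>r<d. f r * vec_index (M *\<^sub>v Matrix.vec d f) r)"
    unfolding lessThan_atLeast0
  proof (rule sum.cong[OF refl])
    fix r assume "r \<in> {0..<d}"
    then have r: "r < d" by simp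
    show "vec_index (Matrix.vec d f) r * vec_index (M *\<^sub>v Matrix.vec d f) r = f r * vec_index (M *\<^sub>v Matrix.vec d f) r"
      by (simp only: index_vec[OF r])
  qed
  also have "\<dots> = (\<Sum>r<d. f r * (\<Sum>s<d. M $$ (r,s) * f s))"
    by (intro sum.cong refl) (simp add: mv_idx[OF M V])
  also have "\<dots> = qf d (\<lambda>r s. M $$ (r,s)) f"
    unfolding qf_def by (intro sum.cong refl) (simp add: sum_distrib_left mult.assoc)
  finally show ?thesis by (rule sym)
qed

lemma qf_lower_M:
  fixes M :: "real Matrix.mat"
  assumes M: "M \<in> carrier_mat d d" and pd: "pos_def_mat M"
  shows "\<exists>\<mu>>0. \<forall>f. qf d (\<lambda>r s. M $$ (r,s)) f \<ge> \<mu> * nsq d f"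
proof -
  let ?A = "\<lambda>r s. M $$ (r,s)"
  have dr: "dim_row M = d" "dim_col M = d" using M by auto
  have pd': "(\<exists>d. M \<in> carrier_mat d d) \<and> transpose_mat M = M \<and>
     (\<forall>v \<in> carrier_vec (dim_row M). v \<noteq> 0\<^sub>v (dim_row M) \<longrightarrow> Matrix.scalar_prod v (M *\<^sub>v v) > 0)"
    using pd unfolding pos_def_mat_def .
  have symM: "transpose_mat M = M" using pd' by (rule conjE) (erule conjE)
  have sym: "\<forall>r<d. \<forall>s<d. ?A r s = ?A s r"
  proof (intro allI impI)
    fix r s assume "r < d" "s < d"
    then have "transpose_mat M $$ (r,s) = M $$ (s,r)" using dr by simp
    then show "?A r s = ?A s r" using symM by simp
  qed
  have pdv: "\<forall>v \<in> carrier_vec d. v \<noteq> 0\<^sub>v d \<longrightarrow> Matrix.scalar_prod v (M *\<^sub>v v) > 0"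
    using conjunct2[OF conjunct2[OF pd']] unfolding dr(1) .
  have pos: "qf d ?A f > 0" if nz: "\<exists>r<d. f r \<noteq> 0" for f
  proof -
    have "Matrix.vec d f \<noteq> 0\<^sub>v d"
    proof
      assume "Matrix.vec d f = 0\<^sub>v d"
      have "\<forall>r<d. f r = 0"
      proof (intro allI impI)
        fix r assume r: "r < d"
        have "vec_index (Matrix.vec d f) r = vec_index (0\<^sub>v d :: real Matrix.vec) r" using \<open>Matrix.vec d f = 0\<^sub>v d\<close> by simp
        then show "f r = 0" using r by simp
      qed
      then show False using nz by blast
    qed
    then have "Matrix.scalar_prod (Matrix.vec d f) (M *\<^sub>v Matrix.vec d f) > 0"
      by (intro pdv[rule_format]) simp
    then show ?thesis unfolding qf_vec[OF M] .
  qed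
  have psd: "\<forall>f. qf d ?A f \<ge> 0"
  proof
    fix f
    show "qf d ?A f \<ge> 0"
    proof (cases "\<exists>r<d. f r \<noteq> 0")
      case True show ?thesis by (rule less_imp_le[OF pos[OF True]])
    next
      case False
      then have "qf d ?A f = (\<Sum>r<d. \<Sum>s<d. 0)" unfolding qf_def by (intro sum.cong refl) auto
      then show ?thesis by simp
    qed
  qed
  have inj: "\<forall>v\<in>carrier_vec d. M *\<^sub>v v = 0\<^sub>v d \<longrightarrow> v = 0\<^sub>v d"
  proof (intro ballI impI)
    fix v :: "real Matrix.vec" assume v: "v \<in> carrier_vec d" and z: "M *\<^sub>v v = 0\<^sub>v d"
    show "v = 0\<^sub>v d"
    proof (rule ccontr)
      assume "v \<noteq> 0\<^sub>v d"
      then have "Matrix.scalar_prod v (M *\<^sub>v v) > 0" using pdv v by simp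
      moreover have "Matrix.scalar_prod v (M *\<^sub>v v) = 0" unfolding z using v by simp
      ultimately show False by simp
    qed
  qed
  obtain B where B: "B \<in> carrier_mat d d" "M * B = 1\<^sub>m d" "B * M = 1\<^sub>m d" using inv_exists[OF M inj] by auto
  define F where "F = sqrt (\<Sum>r<d. \<Sum>s<d. (B $$ (r,s))^2)"
  have F0: "F \<ge> 0" unfolding F_def by (intro real_sqrt_ge_zero sum_nonneg) auto
  have main: "qf d ?A f \<ge> 1/(F+1) * nsq d f" for f
  proof -
    define V where "V = Matrix.vec d f"
    have V: "V \<in> carrier_vec d" unfolding V_def by simp
    define g where "g = (\<lambda>r. vec_index (B *\<^sub>v V) r)"
    have BV: "B *\<^sub>v V \<in> carrier_vec d" using B(1) V by simp
    have "M *\<^sub>v (B *\<^sub>v V) = (M * B) *\<^sub>v V" by (rule assoc_mult_mat_vec[OF M B(1) V, symmetric])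
    also have "\<dots> = V" using B(2) V by simp
    finally have MBV: "M *\<^sub>v (B *\<^sub>v V) = V" .
    have Mg: "\<forall>r<d. (\<Sum>s<d. ?A r s * g s) = f r"
    proof (intro allI impI)
      fix r assume r: "r < d"
      have "vec_index (M *\<^sub>v (B *\<^sub>v V)) r = (\<Sum>s<d. M $$ (r,s) * vec_index (B *\<^sub>v V) s)" by (rule mv_idx[OF M BV r])
      then show "(\<Sum>s<d. ?A r s * g s) = f r" using MBV r unfolding g_def V_def by simp
    qed
    have gr: "g r = (\<Sum>s<d. B $$ (r,s) * f s)" if r: "r < d" for r
      unfolding g_def using mv_idx[OF B(1) V r] r unfolding V_def by simp
    have "nsq d g \<le> (\<Sum>r<d. (\<Sum>s<d. (B $$ (r,s))^2) * nsq d f)"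
      unfolding nsq_def
    proof (rule sum_mono)
      fix r assume "r \<in> {..<d}"
      then have "(g r)^2 = (\<Sum>s<d. B $$ (r,s) * f s)^2" using gr by simp
      also have "\<dots> \<le> (\<Sum>s<d. (B $$ (r,s))^2) * (\<Sum>s<d. (f s)^2)" by (rule Cauchy_Schwarz_ineq_sum)
      finally show "(g r)^2 \<le> (\<Sum>s<d. (B $$ (r,s))^2) * (\<Sum>r<d. (f r)^2)" .
    qed
    also have "\<dots> = F^2 * nsq d f" unfolding F_def by (simp add: sum_distrib_right sum_nonneg)
    finally have ng: "nsq d g \<le> F^2 * nsq d f" .
    have "sqrt (nsq d g) \<le> sqrt (F^2 * nsq d f)" using ng real_sqrt_le_mono by blast
    also have "\<dots> = F * sqrt (nsq d f)" using F0 by (simp add: real_sqrt_mult)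
    finally have sg: "sqrt (nsq d g) \<le> F * sqrt (nsq d f)" .
    have "qf d ?A g = (\<Sum>r<d. g r * f r)" by (rule qf_sol[OF Mg])
    also have "\<dots> \<le> sqrt (nsq d g) * sqrt (nsq d f)" by (rule CS2)
    also have "\<dots> \<le> F * sqrt (nsq d f) * sqrt (nsq d f)" by (rule mult_right_mono[OF sg]) (simp add: nsq_nonneg)
    also have "\<dots> = F * nsq d f" using nsq_nonneg[of d f] by (simp add: mult.assoc)
    finally have qg: "qf d ?A g \<le> F * nsq d f" .
    have bileq: "bil d ?A g f = nsq d f"
    proof -
      have "bil d ?A g f = (\<Sum>s<d. \<Sum>r<d. g r * ?A r s * f s)" unfolding bil_def by (rule sum.swap)
      also have "\<dots> = (\<Sum>s<d. f s * (\<Sum>r<d. ?A s r * g r))"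
      proof (intro sum.cong refl)
        fix s assume s: "s \<in> {..<d}"
        have "(\<Sum>r<d. g r * ?A r s * f s) = (\<Sum>r<d. f s * (?A s r * g r))"
          using sym s by (intro sum.cong refl) (simp add: ac_simps)
        then show "(\<Sum>r<d. g r * ?A r s * f s) = f s * (\<Sum>r<d. ?A s r * g r)" by (simp add: sum_distrib_left)
      qed
      also have "\<dots> = (\<Sum>s<d. f s * f s)" using Mg by (intro sum.cong refl) simp
      also have "\<dots> = nsq d f" unfolding nsq_def by (simp add: power2_eq_square)
      finally show ?thesis .
    qed
    have "(nsq d f)^2 \<le> qf d ?A g * qf d ?A f" using psd_cs[OF sym psd, of g f] unfolding bileq .
    also have "\<dots> \<le> F * nsq d f * qf d ?A f" using qg psd by (simp add: mult_right_mono)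
    finally have key: "(nsq d f)^2 \<le> F * nsq d f * qf d ?A f" .
    show ?thesis
    proof (cases "nsq d f = 0")
      case True then show ?thesis using psd by simp
    next
      case False
      then have np: "nsq d f > 0" using nsq_nonneg[of d f] by simp
      then have "nsq d f \<le> F * qf d ?A f" using key by (simp add: power2_eq_square mult.assoc)
      also have "\<dots> \<le> (F+1) * qf d ?A f" using psd by (simp add: mult_right_mono)
      finally show ?thesis using F0 by (simp add: field_simps)
    qed
  qed
  show ?thesis using F0 main by (intro exI[of _ "1/(F+1)"]) auto
qed

lemma xtx_idx: "r < k+p \<Longrightarrow> s < k+p \<Longrightarrow>
  (transpose_mat (design_x k p n X) * design_x k p n X) $$ (r,s) = (\<Sum>t<k*n. xe k n X r t * xe k n X s t)"
  apply (subst index_mult_mat(1))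
    apply (simp add: design_x_idx)
   apply (simp add: design_x_idx)
  apply (simp only: scalar_prod_def lessThan_atLeast0)
  apply (rule sum.cong)
   apply (simp add: design_x_idx)
  apply (simp add: design_x_idx)
  done

lemma qf_scale: "qf d (\<lambda>r s. B r s / c) f = qf d B f / c"
  unfolding qf_def by (simp add: sum_divide_distrib)

lemma qf_gram0: "qf d (\<lambda>r s. \<Sum>t<T. a r t * w t * a s t) f = (\<Sum>t<T. w t * (\<Sum>r<d. a r t * f r)^2)"
proof -
  have "(\<Sum>t<T. w t * (\<Sum>r<d. a r t * f r)^2) = (\<Sum>t<T. \<Sum>r<d. \<Sum>s<d. f r * (a r t * w t * a s t) * f s)"
  proof (rule sum.cong[OF refl])
    fix t
    have "w t * (\<Sum>r<d. a r t * f r)^2 = w t * (\<Sum>r<d. \<Sum>s<d. (a r t * f r) * (a s t * f s))" by (simp only: sq_sum_prod)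
    also have "\<dots> = (\<Sum>r<d. \<Sum>s<d. w t * ((a r t * f r) * (a s t * f s)))" by (simp add: sum_distrib_left)
    also have "\<dots> = (\<Sum>r<d. \<Sum>s<d. f r * (a r t * w t * a s t) * f s)" by (intro sum.cong refl) (simp only: ac_simps)
    finally show "w t * (\<Sum>r<d. a r t * f r)^2 = (\<Sum>r<d. \<Sum>s<d. f r * (a r t * w t * a s t) * f s)" .
  qed
  also have "\<dots> = (\<Sum>r<d. \<Sum>t<T. \<Sum>s<d. f r * (a r t * w t * a s t) * f s)" by (rule sum.swap)
  also have "\<dots> = (\<Sum>r<d. \<Sum>s<d. \<Sum>t<T. f r * (a r t * w t * a s t) * f s)" by (intro sum.cong refl) (rule sum.swap)
  also have "\<dots> = qf d (\<lambda>r s. \<Sum>t<T. a r t * w t * a s t) f" unfolding qf_def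
    by (intro sum.cong refl) (simp add: sum_distrib_left sum_distrib_right)
  finally show ?thesis by (rule sym)
qed

lemma qf_gram_mono:
  assumes "\<forall>t<T. w t \<ge> c"
  shows "qf d (\<lambda>r s. \<Sum>t<T. a r t * w t * a s t) f \<ge> c * qf d (\<lambda>r s. \<Sum>t<T. a r t * 1 * a s t) f"
proof -
  have "c * qf d (\<lambda>r s. \<Sum>t<T. a r t * 1 * a s t) f = (\<Sum>t<T. c * (\<Sum>r<d. a r t * f r)^2)"
    unfolding qf_gram0 by (simp add: sum_distrib_left)
  also have "\<dots> \<le> (\<Sum>t<T. w t * (\<Sum>r<d. a r t * f r)^2)"
    using assms by (intro sum_mono mult_right_mono) auto
  finally show ?thesis unfolding qf_gram0 .
qed

lemma xe_cases: "xe k n X r t = (if r < k then (if t div n = r then 1 else 0) else X (t mod n) (r - k))"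
  by (simp add: xe_def)

lemma S4x:
  assumes r: "r < k+p" and mom: "(\<Sum>s<p. \<Sum>i<n. (X i s)^4) \<le> real n * C1" and C1: "C1 \<ge> 0"
  shows "(\<Sum>t<k*n. (xe k n X r t)^4) \<le> real k * real n * (1 + C1)"
proof (cases "r < k")
  case True
  have "(\<Sum>t<k*n. (xe k n X r t)^4) \<le> (\<Sum>t<k*n. (1::real))"
    by (intro sum_mono) (simp add: xe_def True)
  also have "\<dots> = real k * real n" by simp
  also have "\<dots> \<le> real k * real n * (1 + C1)"
  proof -
    have "real k * real n * 1 \<le> real k * real n * (1 + C1)" by (rule mult_left_mono) (use C1 in auto)
    then show ?thesis by simp
  qed
  finally show ?thesis .
next
  case False
  then have s: "r - k < p" using r by simp
  have "(\<Sum>t<k*n. (xe k n X r t)^4) = (\<Sum>t<k*n. (\<lambda>a i. (X i (r-k))^4) (t div n) (t mod n))"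
    by (intro sum.cong refl) (simp add: xe_def False)
  also have "\<dots> = (\<Sum>a<k. \<Sum>i<n. (X i (r-k))^4)" by (rule sum_kn)
  also have "\<dots> = real k * (\<Sum>i<n. (X i (r-k))^4)" by simp
  also have "(\<Sum>i<n. (X i (r-k))^4) \<le> (\<Sum>s<p. \<Sum>i<n. (X i s)^4)"
    using s by (intro member_le_sum) (auto intro: sum_nonneg)
  then have "real k * (\<Sum>i<n. (X i (r-k))^4) \<le> real k * (real n * C1)"
    using mom by (intro mult_left_mono) auto
  also have "\<dots> \<le> real k * real n * (1 + C1)" by (simp add: algebra_simps)
  finally show ?thesis .
qed

lemma S4y: fixes y :: "nat \<Rightarrow> nat \<Rightarrow> real" and k n :: nat shows
  "(\<Sum>t<k*n. (y (t div n) (t mod n))^4) = (\<Sum>a<k. \<Sum>i<n. (y a i :: real)^4)"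
  using sum_kn[where g="\<lambda>a i. (y a i)^4"] by simp

lemma sq4: "\<bar>a * b\<bar> \<le> ((a::real)^4 + b^4 + 2) / 4"
proof -
  have "0 \<le> (\<bar>a\<bar> - \<bar>b\<bar>)^2" by simp
  then have h1: "2 * \<bar>a * b\<bar> \<le> a^2 + b^2" by (simp add: power2_eq_square abs_mult algebra_simps)
  have "0 \<le> (a^2 - 1)^2" by simp
  then have h2: "2 * a^2 \<le> a^4 + 1" by (simp add: power2_eq_square algebra_simps power4_eq_xxxx)
  have "0 \<le> (b^2 - 1)^2" by simp
  then have h3: "2 * b^2 \<le> b^4 + 1" by (simp add: power2_eq_square algebra_simps power4_eq_xxxx)
  from h1 h2 h3 have "4 * \<bar>a * b\<bar> \<le> a^4 + b^4 + 2" by linarith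
  then show ?thesis by simp
qed

lemma sq2: "(a * b)^2 \<le> ((a::real)^4 + b^4) / 2"
proof -
  have "0 \<le> (a^2 - b^2)^2" by simp
  then show ?thesis by (simp add: power2_eq_square algebra_simps power4_eq_xxxx)
qed

lemma qf_cong: "(\<forall>r<d. \<forall>s<d. A r s = B r s) \<Longrightarrow> qf d A f = qf d B f"
  unfolding qf_def by (intro sum.cong refl) auto

lemma nsq_cong: "(\<forall>r<d. f r = g r) \<Longrightarrow> nsq d f = nsq d g"
  unfolding nsq_def by (intro sum.cong refl) auto

definition Zs :: "nat \<Rightarrow> nat \<Rightarrow> (nat \<Rightarrow> nat) pmf \<Rightarrow> (nat \<Rightarrow> real) \<Rightarrow> (nat \<Rightarrow> nat) \<Rightarrow> real" where
  "Zs k n Q u z = (\<Sum>t<k*n. u t * (Rind z (t div n) (t mod n) - piP Q (t div n) (t mod n))) / real n"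

lemma Zs_bound:
  assumes pr: "\<forall>t<k*n. 0 < piP Q (t div n) (t mod n) \<and> piP Q (t div n) (t mod n) < 1"
  shows "\<bar>Zs k n Q u z\<bar> \<le> (\<Sum>t<k*n. \<bar>u t\<bar>) / real n"
proof -
  have "\<bar>\<Sum>t<k*n. u t * (Rind z (t div n) (t mod n) - piP Q (t div n) (t mod n))\<bar>
      \<le> (\<Sum>t<k*n. \<bar>u t * (Rind z (t div n) (t mod n) - piP Q (t div n) (t mod n))\<bar>)" by (rule sum_abs)
  also have "\<dots> \<le> (\<Sum>t<k*n. \<bar>u t\<bar>)"
  proof (rule sum_mono)
    fix t assume "t \<in> {..<k*n}"
    then have p: "0 < piP Q (t div n) (t mod n)" "piP Q (t div n) (t mod n) < 1" using pr by auto
    have "\<bar>Rind z (t div n) (t mod n) - piP Q (t div n) (t mod n)\<bar> \<le> 1"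
      using Rind01[of z "t div n" "t mod n"] p by auto
    then show "\<bar>u t * (Rind z (t div n) (t mod n) - piP Q (t div n) (t mod n))\<bar> \<le> \<bar>u t\<bar>"
      unfolding abs_mult by (simp add: mult_left_le)
  qed
  finally show ?thesis unfolding Zs_def by (simp add: divide_right_mono)
qed

lemma gram_lower:
  fixes X :: "nat \<Rightarrow> nat \<Rightarrow> real" and w :: "nat \<Rightarrow> nat \<Rightarrow> real"
  assumes n: "n > 0" and wc: "\<forall>t<k*n. w (t div n) (t mod n) \<ge> c" and c: "c \<ge> 0"
    and close: "\<forall>r<d. \<forall>s<d. \<bar>(\<Sum>t<k*n. xe k n X r t * xe k n X s t) / real n - Mf r s\<bar> \<le> \<eta>"
    and eta: "\<eta> \<ge> 0" and small: "real d * \<eta> \<le> \<mu> / 2"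
    and Mpd: "\<forall>f. qf d Mf f \<ge> \<mu> * nsq d f"
  shows "qf d (\<lambda>r s. (\<Sum>t<k*n. xe k n X r t * w (t div n) (t mod n) * xe k n X s t) / real n) f \<ge> c * (\<mu> / 2) * nsq d f"
proof -
  have np: "real n > 0" using n by simp
  have "qf d (\<lambda>r s. (\<Sum>t<k*n. xe k n X r t * w (t div n) (t mod n) * xe k n X s t) / real n) f
     = qf d (\<lambda>r s. \<Sum>t<k*n. xe k n X r t * w (t div n) (t mod n) * xe k n X s t) f / real n"
    by (rule qf_scale)
  also have "\<dots> \<ge> c * qf d (\<lambda>r s. \<Sum>t<k*n. xe k n X r t * 1 * xe k n X s t) f / real n"
    using qf_gram_mono[where w="\<lambda>t. w (t div n) (t mod n)" and a="xe k n X", OF wc] np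
    by (simp add: divide_right_mono)
  finally have s1: "qf d (\<lambda>r s. (\<Sum>t<k*n. xe k n X r t * w (t div n) (t mod n) * xe k n X s t) / real n) f
     \<ge> c * (qf d (\<lambda>r s. \<Sum>t<k*n. xe k n X r t * 1 * xe k n X s t) f / real n)" by simp
  have "qf d (\<lambda>r s. \<Sum>t<k*n. xe k n X r t * 1 * xe k n X s t) f / real n
      = qf d (\<lambda>r s. (\<Sum>t<k*n. xe k n X r t * xe k n X s t) / real n) f"
    by (simp add: qf_scale)
  also have "\<dots> \<ge> qf d Mf f - \<eta> * real d * nsq d f"
    by (rule qf_ge[OF close eta])
  finally have "qf d (\<lambda>r s. \<Sum>t<k*n. xe k n X r t * 1 * xe k n X s t) f / real n \<ge> qf d Mf f - \<eta> * real d * nsq d f" .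
  moreover have "\<eta> * real d * nsq d f \<le> \<mu>/2 * nsq d f"
  proof -
    have "(real d * \<eta>) * nsq d f \<le> (\<mu>/2) * nsq d f" by (rule mult_right_mono[OF small nsq_nonneg])
    then show ?thesis by (simp add: algebra_simps)
  qed
  moreover have "qf d Mf f \<ge> \<mu> * nsq d f" using Mpd by blast
  ultimately have "qf d (\<lambda>r s. \<Sum>t<k*n. xe k n X r t * 1 * xe k n X s t) f / real n \<ge> (\<mu>/2) * nsq d f" by linarith
  then have "c * (qf d (\<lambda>r s. \<Sum>t<k*n. xe k n X r t * 1 * xe k n X s t) f / real n) \<ge> c * ((\<mu>/2) * nsq d f)"
    using c by (rule mult_left_mono)
  then have "c * (\<mu>/2) * nsq d f \<le> c * (qf d (\<lambda>r s. \<Sum>t<k*n. xe k n X r t * 1 * xe k n X s t) f / real n)"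
    by (simp only: mult.assoc)
  then show ?thesis using s1 by (rule order_trans)
qed

lemma h_bound:
  fixes X y w :: "nat \<Rightarrow> nat \<Rightarrow> real"
  assumes n: "n > 0" and r: "r < k+p" and C0: "C \<ge> 0"
    and w: "\<forall>t<k*n. \<bar>w (t div n) (t mod n)\<bar> \<le> C"
    and mx: "(\<Sum>s<p. \<Sum>i<n. (X i s)^4) \<le> real n * C1"
    and my: "(\<Sum>a<k. \<Sum>i<n. (y a i)^4) \<le> real n * C1" and C1: "C1 \<ge> 0"
  shows "\<bar>(\<Sum>t<k*n. xe k n X r t * w (t div n) (t mod n) * y (t div n) (t mod n)) / real n\<bar>
     \<le> C * (real k * (1 + C1) + C1 + 2 * real k) / 4"
proof -
  have np: "real n > 0" using n by simp
  have "\<bar>\<Sum>t<k*n. xe k n X r t * w (t div n) (t mod n) * y (t div n) (t mod n)\<bar>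
     \<le> (\<Sum>t<k*n. \<bar>xe k n X r t * w (t div n) (t mod n) * y (t div n) (t mod n)\<bar>)" by (rule sum_abs)
  also have "\<dots> \<le> (\<Sum>t<k*n. C * (((xe k n X r t)^4 + (y (t div n) (t mod n))^4 + 2) / 4))"
  proof (rule sum_mono)
    fix t assume "t \<in> {..<k*n}"
    then have wt: "\<bar>w (t div n) (t mod n)\<bar> \<le> C" using w by auto
    have "\<bar>xe k n X r t * w (t div n) (t mod n) * y (t div n) (t mod n)\<bar>
        = \<bar>w (t div n) (t mod n)\<bar> * \<bar>xe k n X r t * y (t div n) (t mod n)\<bar>" by (simp add: abs_mult)
    also have "\<dots> \<le> C * (((xe k n X r t)^4 + (y (t div n) (t mod n))^4 + 2) / 4)"
      by (rule mult_mono[OF wt sq4]) (auto simp: C0)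
    finally show "\<bar>xe k n X r t * w (t div n) (t mod n) * y (t div n) (t mod n)\<bar> \<le> C * (((xe k n X r t)^4 + (y (t div n) (t mod n))^4 + 2) / 4)" .
  qed
  also have "\<dots> = C * ((\<Sum>t<k*n. (xe k n X r t)^4) + (\<Sum>t<k*n. (y (t div n) (t mod n))^4) + 2 * real (k*n)) / 4"
    by (simp add: sum_distrib_left sum.distrib sum_divide_distrib[symmetric] algebra_simps)
  also have "\<dots> \<le> C * (real k * real n * (1 + C1) + real n * C1 + 2 * real (k*n)) / 4"
  proof -
    have "(\<Sum>t<k*n. (xe k n X r t)^4) \<le> real k * real n * (1 + C1)" by (rule S4x[OF r mx C1])
    moreover have "(\<Sum>t<k*n. (y (t div n) (t mod n))^4) \<le> real n * C1" using S4y[where y=y and k=k and n=n] my by simp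
    ultimately show ?thesis using C0 by (intro divide_right_mono mult_left_mono) auto
  qed
  also have "\<dots> = real n * (C * (real k * (1 + C1) + C1 + 2 * real k) / 4)" by (simp add: algebra_simps)
  finally show ?thesis using np by (simp add: pos_divide_le_eq mult.commute)
qed

definition uG :: "nat \<Rightarrow> nat \<Rightarrow> (nat\<Rightarrow>nat\<Rightarrow>real) \<Rightarrow> (nat\<Rightarrow>nat\<Rightarrow>real) \<Rightarrow> nat \<Rightarrow> nat \<Rightarrow> nat \<Rightarrow> real" where
  "uG k n X m r s t = xe k n X r t * m (t div n) (t mod n) * xe k n X s t"

definition uh :: "nat \<Rightarrow> nat \<Rightarrow> (nat\<Rightarrow>nat\<Rightarrow>real) \<Rightarrow> (nat\<Rightarrow>nat\<Rightarrow>real) \<Rightarrow> (nat\<Rightarrow>nat\<Rightarrow>real) \<Rightarrow> nat \<Rightarrow> nat \<Rightarrow> real" where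
  "uh k n X m y r t = xe k n X r t * m (t div n) (t mod n) * y (t div n) (t mod n)"

lemma diffZ:
  "(\<Sum>t<k*n. a t * (m (t div n) (t mod n) * Rind z (t div n) (t mod n)) * b t) / real n
   - (\<Sum>t<k*n. a t * (m (t div n) (t mod n) * piP Q (t div n) (t mod n)) * b t) / real n
   = Zs k n Q (\<lambda>t. a t * m (t div n) (t mod n) * b t) z"
proof -
  have "(\<Sum>t<k*n. a t * (m (t div n) (t mod n) * Rind z (t div n) (t mod n)) * b t)
   - (\<Sum>t<k*n. a t * (m (t div n) (t mod n) * piP Q (t div n) (t mod n)) * b t)
   = (\<Sum>t<k*n. a t * m (t div n) (t mod n) * b t * (Rind z (t div n) (t mod n) - piP Q (t div n) (t mod n)))"
    unfolding sum_subtractf[symmetric] by (intro sum.cong refl) (simp add: algebra_simps)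
  then show ?thesis unfolding Zs_def by (simp add: diff_divide_distrib[symmetric])
qed

lemma sol_sum:
  assumes G: "G \<in> carrier_mat d d" and b: "b \<in> carrier_vec d" and h: "G *\<^sub>v b = h" and n: "real n > 0"
  shows "\<forall>r<d. (\<Sum>s<d. G $$ (r,s) / real n * vec_index b s) = vec_index h r / real n"
proof (intro allI impI)
  fix r assume r: "r < d"
  have "vec_index h r = (\<Sum>s<d. G $$ (r,s) * vec_index b s)" using mv_idx[OF G b r] h by simp
  then show "(\<Sum>s<d. G $$ (r,s) / real n * vec_index b s) = vec_index h r / real n"
    by (simp add: sum_divide_distrib)
qed

lemma good_bound:
  fixes k p n :: nat and X y m :: "nat \<Rightarrow> nat \<Rightarrow> real" and Q :: "(nat \<Rightarrow> nat) pmf" and z :: "nat \<Rightarrow> nat"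
  assumes n: "n > 0"
    and kap: "\<forall>f. qf (k+p) (\<lambda>r s. (\<Sum>t<k*n. xe k n X r t * (m (t div n) (t mod n) * piP Q (t div n) (t mod n)) * xe k n X s t) / real n) f \<ge> \<kappa> * nsq (k+p) f"
    and kp: "\<kappa> > 0"
    and hb: "\<forall>r<k+p. \<bar>(\<Sum>t<k*n. xe k n X r t * (m (t div n) (t mod n) * piP Q (t div n) (t mod n)) * y (t div n) (t mod n)) / real n\<bar> \<le> H"
    and H: "H \<ge> 0"
    and zG: "\<forall>r<k+p. \<forall>s<k+p. \<bar>Zs k n Q (uG k n X m r s) z\<bar> \<le> \<eta>"
    and zh: "\<forall>r<k+p. \<bar>Zs k n Q (uh k n X m y r) z\<bar> \<le> \<eta>"
    and eta: "\<eta> \<ge> 0" and small: "real (k+p) * \<eta> \<le> \<kappa>/2"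
  shows "vnorm (bhat k p n y X m z - btarget k p n y X m Q) \<le> 2 * \<eta> * (1 + real (k+p) * H / \<kappa>) * sqrt (real (k+p)) / \<kappa>"
proof -
  define d where "d = k+p"
  define x where "x = design_x k p n X"
  define wP where "wP = (\<lambda>a i. m a i * piP Q a i)"
  define wR where "wR = (\<lambda>a i. m a i * Rind z a i)"
  define GP where "GP = transpose_mat x * diag_kn k n wP * x"
  define GR where "GR = transpose_mat x * diag_kn k n wR * x"
  define hP where "hP = transpose_mat x * diag_kn k n wP *\<^sub>v vec_kn k n y"
  define hR where "hR = transpose_mat x * diag_kn k n wR *\<^sub>v vec_kn k n y"
  have np: "real n > 0" using n by simp
  have bt: "btarget k p n y X m Q = mp_inverse GP *\<^sub>v hP"
    unfolding btarget_def Let_def diag_mult GP_def hP_def x_def wP_def ..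
  have bh: "bhat k p n y X m z = mp_inverse GR *\<^sub>v hR"
    unfolding bhat_def Let_def diag_mult GR_def hR_def x_def wR_def ..
  have GPc: "GP \<in> carrier_mat d d" unfolding GP_def x_def d_def by (rule G_dim)
  have GRc: "GR \<in> carrier_mat d d" unfolding GR_def x_def d_def by (rule G_dim)
  have hPc: "hP \<in> carrier_vec d" unfolding hP_def x_def d_def by (rule h_dim)
  have hRc: "hR \<in> carrier_vec d" unfolding hR_def x_def d_def by (rule h_dim)
  define AP where "AP = (\<lambda>r s. GP $$ (r,s) / real n)"
  define AR where "AR = (\<lambda>r s. GR $$ (r,s) / real n)"
  have APe: "\<forall>r<d. \<forall>s<d. AP r s = (\<Sum>t<k*n. xe k n X r t * (m (t div n) (t mod n) * piP Q (t div n) (t mod n)) * xe k n X s t) / real n"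
    unfolding AP_def GP_def x_def wP_def d_def by (simp add: G_idx)
  have ARe: "\<forall>r<d. \<forall>s<d. AR r s = (\<Sum>t<k*n. xe k n X r t * (m (t div n) (t mod n) * Rind z (t div n) (t mod n)) * xe k n X s t) / real n"
    unfolding AR_def GR_def x_def wR_def d_def by (simp add: G_idx)
  have hPe: "\<forall>r<d. vec_index hP r / real n = (\<Sum>t<k*n. xe k n X r t * (m (t div n) (t mod n) * piP Q (t div n) (t mod n)) * y (t div n) (t mod n)) / real n"
    unfolding hP_def x_def wP_def d_def by (simp add: h_idx)
  have hRe: "\<forall>r<d. vec_index hR r / real n = (\<Sum>t<k*n. xe k n X r t * (m (t div n) (t mod n) * Rind z (t div n) (t mod n)) * y (t div n) (t mod n)) / real n"
    unfolding hR_def x_def wR_def d_def by (simp add: h_idx)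
  have kapP: "\<forall>f. qf d AP f \<ge> \<kappa> * nsq d f"
    using kap qf_cong[OF APe] unfolding d_def by simp
  have eA: "\<forall>r<d. \<forall>s<d. \<bar>AR r s - AP r s\<bar> \<le> \<eta>"
  proof (intro allI impI)
    fix r s assume r: "r < d" and s: "s < d"
    have "AR r s - AP r s = Zs k n Q (uG k n X m r s) z"
      using ARe APe r s diffZ[where a="xe k n X r" and b="xe k n X s" and m=m and Q=Q and z=z and k=k and n=n]
      unfolding uG_def by simp
    then show "\<bar>AR r s - AP r s\<bar> \<le> \<eta>" using zG r s unfolding d_def by simp
  qed
  have eh: "\<forall>r<d. \<bar>vec_index hR r / real n - vec_index hP r / real n\<bar> \<le> \<eta>"
  proof (intro allI impI)
    fix r assume r: "r < d"
    have "vec_index hR r / real n - vec_index hP r / real n = Zs k n Q (uh k n X m y r) z"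
      using hRe hPe r n diffZ[where a="xe k n X r" and b="\<lambda>t. y (t div n) (t mod n)" and m=m and Q=Q and z=z and k=k and n=n]
      unfolding uh_def by simp
    then show "\<bar>vec_index hR r / real n - vec_index hP r / real n\<bar> \<le> \<eta>" using zh r unfolding d_def by simp
  qed
  have kapR: "\<forall>f. qf d AR f \<ge> \<kappa>/2 * nsq d f"
  proof
    fix f
    have "qf d AR f \<ge> qf d AP f - \<eta> * real d * nsq d f" by (rule qf_ge[OF eA eta])
    moreover have "qf d AP f \<ge> \<kappa> * nsq d f" using kapP by blast
    moreover have "\<eta> * real d * nsq d f \<le> \<kappa>/2 * nsq d f"
    proof -
      have "(real d * \<eta>) * nsq d f \<le> (\<kappa>/2) * nsq d f" using small unfolding d_def by (intro mult_right_mono nsq_nonneg)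
      then show ?thesis by (simp add: algebra_simps)
    qed
    ultimately show "qf d AR f \<ge> \<kappa>/2 * nsq d f" by linarith
  qed
  have injG: "\<forall>v\<in>carrier_vec d. G *\<^sub>v v = 0\<^sub>v d \<longrightarrow> v = 0\<^sub>v d"
    if Gc: "G \<in> carrier_mat d d" and kk: "k' > 0" and q: "\<forall>f. qf d (\<lambda>r s. G $$ (r,s) / real n) f \<ge> k' * nsq d f" for G k'
  proof (rule inj_of_qf[OF Gc, of "real n * k'"])
    show "real n * k' > 0" using np kk by simp
    show "\<forall>f. real n * k' * nsq d f \<le> qf d (\<lambda>r s. G $$ (r,s)) f"
    proof
      fix f
      have "k' * nsq d f \<le> qf d (\<lambda>r s. G $$ (r,s) / real n) f" using q by blast
      also have "\<dots> = qf d (\<lambda>r s. G $$ (r,s)) f / real n" by (rule qf_scale)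
      finally have "k' * nsq d f \<le> qf d (\<lambda>r s. G $$ (r,s)) f / real n" .
      then show "real n * k' * nsq d f \<le> qf d (\<lambda>r s. G $$ (r,s)) f" using np by (simp add: pos_le_divide_eq ac_simps)
    qed
  qed
  have iP: "\<forall>v\<in>carrier_vec d. GP *\<^sub>v v = 0\<^sub>v d \<longrightarrow> v = 0\<^sub>v d"
    by (rule injG[OF GPc kp]) (use kapP in \<open>simp add: AP_def\<close>)
  have iR: "\<forall>v\<in>carrier_vec d. GR *\<^sub>v v = 0\<^sub>v d \<longrightarrow> v = 0\<^sub>v d"
    by (rule injG[OF GRc, of "\<kappa>/2"]) (use kapR kp in \<open>simp_all add: AR_def\<close>)
  obtain sP: "mp_inverse GP *\<^sub>v hP \<in> carrier_vec d" "GP *\<^sub>v (mp_inverse GP *\<^sub>v hP) = hP"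
    using solve[OF GPc hPc iP] by blast
  obtain sR: "mp_inverse GR *\<^sub>v hR \<in> carrier_vec d" "GR *\<^sub>v (mp_inverse GR *\<^sub>v hR) = hR"
    using solve[OF GRc hRc iR] by blast
  define b0 where "b0 = mp_inverse GP *\<^sub>v hP"
  define b1 where "b1 = mp_inverse GR *\<^sub>v hR"
  have sol0: "\<forall>r<d. (\<Sum>s<d. AP r s * vec_index b0 s) = vec_index hP r / real n"
    unfolding AP_def b0_def by (rule sol_sum[OF GPc sP(1) sP(2) np])
  have sol1: "\<forall>r<d. (\<Sum>s<d. AR r s * vec_index b1 s) = vec_index hR r / real n"
    unfolding AR_def b1_def by (rule sol_sum[OF GRc sR(1) sR(2) np])
  have hb': "\<forall>r<d. \<bar>vec_index hP r / real n\<bar> \<le> H" using hb hPe n unfolding d_def by simp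
  have cd: "sqrt (nsq d (\<lambda>s. vec_index b1 s - vec_index b0 s)) \<le> 2 * \<eta> * (1 + real d * H / \<kappa>) * sqrt (real d) / \<kappa>"
    by (rule core_det[OF sol0 sol1 kapP kp eA eh eta _ hb' H]) (use small in \<open>simp add: d_def\<close>)
  have b0c: "b0 \<in> carrier_vec d" and b1c: "b1 \<in> carrier_vec d" using sP(1) sR(1) unfolding b0_def b1_def by auto
  have dc: "b1 - b0 \<in> carrier_vec d" using b0c b1c by simp
  have "vnorm (b1 - b0) = sqrt (nsq d (vec_index (b1 - b0)))" by (rule vnorm_nsq[OF dc])
  also have "nsq d (vec_index (b1 - b0)) = nsq d (\<lambda>s. vec_index b1 s - vec_index b0 s)"
    using b0c b1c by (intro nsq_cong) auto
  finally have "vnorm (b1 - b0) \<le> 2 * \<eta> * (1 + real d * H / \<kappa>) * sqrt (real d) / \<kappa>" using cd by simp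
  then show ?thesis unfolding bt bh b0_def[symmetric] b1_def[symmetric] d_def .
qed

lemma div_mod_lt: "t < k*n \<Longrightarrow> t div n < k \<and> t mod n < (n::nat)"
proof -
  assume t: "t < k*n"
  then have "n > 0" by (cases n) auto
  then show ?thesis using t by (simp add: less_mult_imp_div_less)
qed

lemma core_main:
  fixes k p :: nat and N :: "nat \<Rightarrow> nat" and y X m :: "nat \<Rightarrow> nat \<Rightarrow> nat \<Rightarrow> real"
    and P :: "nat \<Rightarrow> (nat \<Rightarrow> nat) pmf" and M :: "real Matrix.mat" and c C C1 K :: real and \<delta> :: "nat \<Rightarrow> real"
  assumes k_pos: "k \<ge> 1"
    and N_lim: "filterlim N at_top sequentially"
    and pi_range: "\<And>\<nu> a i. a < k \<Longrightarrow> i < N \<nu> \<Longrightarrow> 0 < piP (P \<nu>) a i \<and> piP (P \<nu>) a i < 1"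
    and A2_dim: "M \<in> carrier_mat (k+p) (k+p)"
    and A2_pd: "pos_def_mat M"
    and A2_lim: "\<And>r s. r < k+p \<Longrightarrow> s < k+p \<Longrightarrow>
       ((\<lambda>\<nu>. (transpose_mat (design_x k p (N \<nu>) (X \<nu>)) * design_x k p (N \<nu>) (X \<nu>)) $$ (r,s)
               / real (N \<nu>)) \<longlongrightarrow> M $$ (r,s)) sequentially"
    and A5_c: "0 < c" and A5_cC: "c < C"
    and A5: "\<And>\<nu> a i. a < k \<Longrightarrow> i < N \<nu> \<Longrightarrow>
               c < m \<nu> a i * piP (P \<nu>) a i \<and> m \<nu> a i * piP (P \<nu>) a i < C"
    and momy: "\<forall>\<nu>. (\<Sum>a<k. \<Sum>i<N \<nu>. (y \<nu> a i)^4) / real (N \<nu>) < C1"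
    and momx: "\<forall>\<nu>. (\<Sum>s<p. \<Sum>i<N \<nu>. (X \<nu> i s)^4) / real (N \<nu>) < C1"
    and dnn: "\<forall>\<nu>. \<delta> \<nu> \<ge> 0" and dlim: "(\<delta> \<longlongrightarrow> 0) sequentially" and K: "K \<ge> 0"
    and var: "\<forall>\<nu>. N \<nu> > 0 \<longrightarrow>
       (\<forall>r<k+p. \<forall>s<k+p. measure_pmf.expectation (P \<nu>) (\<lambda>z. (Zs k (N \<nu>) (P \<nu>) (uG k (N \<nu>) (X \<nu>) (m \<nu>) r s) z)^2) \<le> K * \<delta> \<nu>) \<and>
       (\<forall>r<k+p. measure_pmf.expectation (P \<nu>) (\<lambda>z. (Zs k (N \<nu>) (P \<nu>) (uh k (N \<nu>) (X \<nu>) (m \<nu>) (y \<nu>) r) z)^2) \<le> K * \<delta> \<nu>)"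
  shows "bigO_p P (\<lambda>\<nu> z. bhat k p (N \<nu>) (y \<nu>) (X \<nu>) (m \<nu>) z
                      - btarget k p (N \<nu>) (y \<nu>) (X \<nu>) (m \<nu>) (P \<nu>))
        (\<lambda>\<nu>. sqrt (\<delta> \<nu>))"
proof -
  define d where "d = k+p"
  have d1: "d \<ge> 1" using k_pos unfolding d_def by simp
  have dpos: "real d > 0" using d1 by simp
  have C1nn: "C1 \<ge> 0"
  proof -
    have "0 \<le> (\<Sum>a<k. \<Sum>i<N 0. (y 0 a i)^4) / real (N 0)" by (intro divide_nonneg_nonneg sum_nonneg) auto
    then show ?thesis using momy by (metis less_eq_real_def order_trans)
  qed
  have C0: "C \<ge> 0" using A5_c A5_cC by simp
  obtain \<mu> where mu: "\<mu> > 0" "\<forall>f. qf d (\<lambda>r s. M $$ (r,s)) f \<ge> \<mu> * nsq d f"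
    using qf_lower_M[OF A2_dim[folded d_def] A2_pd] by blast
  define \<eta>' where "\<eta>' = \<mu> / (2 * real d)"
  have eta'p: "\<eta>' > 0" unfolding \<eta>'_def using mu(1) dpos by simp
  have deta': "real d * \<eta>' \<le> \<mu> / 2" unfolding \<eta>'_def using dpos by simp
  define \<kappa> where "\<kappa> = c * (\<mu> / 2)"
  have kp: "\<kappa> > 0" unfolding \<kappa>_def using A5_c mu(1) by simp
  define H where "H = C * (real k * (1 + C1) + C1 + 2 * real k) / 4"
  have H0: "H \<ge> 0" unfolding H_def using C0 C1nn by simp
  have ev_close: "eventually (\<lambda>\<nu>. \<forall>rs\<in>{..<d}\<times>{..<d}.
      \<bar>(\<Sum>t<k * N \<nu>. xe k (N \<nu>) (X \<nu>) (fst rs) t * xe k (N \<nu>) (X \<nu>) (snd rs) t) / real (N \<nu>) - M $$ (fst rs, snd rs)\<bar> < \<eta>') sequentially"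
  proof (rule eventually_ball_finite)
    show "finite ({..<d}\<times>{..<d})" by simp
    show "\<forall>rs\<in>{..<d}\<times>{..<d}. eventually (\<lambda>\<nu>. \<bar>(\<Sum>t<k * N \<nu>. xe k (N \<nu>) (X \<nu>) (fst rs) t * xe k (N \<nu>) (X \<nu>) (snd rs) t) / real (N \<nu>) - M $$ (fst rs, snd rs)\<bar> < \<eta>') sequentially"
    proof
      fix rs assume rsin: "rs \<in> {..<d}\<times>{..<d}"
      obtain r s where rs: "rs = (r,s)" by (cases rs)
      have r: "r < k+p" and s: "s < k+p" using rsin unfolding rs d_def by auto
      have "((\<lambda>\<nu>. (\<Sum>t<k * N \<nu>. xe k (N \<nu>) (X \<nu>) r t * xe k (N \<nu>) (X \<nu>) s t) / real (N \<nu>)) \<longlongrightarrow> M $$ (r, s)) sequentially"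
        using A2_lim[OF r s] by (simp add: xtx_idx[OF r s])
      from tendstoD[OF this eta'p] show "eventually (\<lambda>\<nu>. \<bar>(\<Sum>t<k * N \<nu>. xe k (N \<nu>) (X \<nu>) (fst rs) t * xe k (N \<nu>) (X \<nu>) (snd rs) t) / real (N \<nu>) - M $$ (fst rs, snd rs)\<bar> < \<eta>') sequentially"
        unfolding rs by (simp add: dist_real_def)
    qed
  qed
  have ev_n: "eventually (\<lambda>\<nu>. N \<nu> \<ge> 1) sequentially"
    using N_lim unfolding filterlim_at_top by blast
  show ?thesis
    unfolding bigO_p_def
  proof (intro allI impI)
    fix \<epsilon> :: real assume ep: "\<epsilon> > 0"
    define J where "J = real (d * d + d)"
    have J0: "J \<ge> 0" unfolding J_def by simp
    define \<tau> where "\<tau> = J * K / \<epsilon> + 1"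
    have tau1: "\<tau> \<ge> 1" unfolding \<tau>_def using J0 K ep by simp
    have taup: "\<tau> > 0" using tau1 by simp
    define B where "B = 2 * \<tau> * (1 + real d * H / \<kappa>) * sqrt (real d) / \<kappa>"
    have "((\<lambda>\<nu>. sqrt (\<delta> \<nu>)) \<longlongrightarrow> sqrt 0) sequentially" by (rule tendsto_real_sqrt[OF dlim])
    then have ev_small: "eventually (\<lambda>\<nu>. sqrt (\<delta> \<nu>) < \<kappa> / (2 * real d * \<tau>)) sequentially"
      by (rule order_tendstoD(2)) (use kp dpos taup in simp)
    obtain N0 where N0: "\<And>\<nu>. \<nu> \<ge> N0 \<Longrightarrow> N \<nu> \<ge> 1 \<and>
        (\<forall>rs\<in>{..<d}\<times>{..<d}. \<bar>(\<Sum>t<k * N \<nu>. xe k (N \<nu>) (X \<nu>) (fst rs) t * xe k (N \<nu>) (X \<nu>) (snd rs) t) / real (N \<nu>) - M $$ (fst rs, snd rs)\<bar> < \<eta>') \<and>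
        sqrt (\<delta> \<nu>) < \<kappa> / (2 * real d * \<tau>)"
      using eventually_conj[OF ev_n eventually_conj[OF ev_close ev_small]] unfolding eventually_sequentially by blast
    show "\<exists>B N0. \<forall>\<nu>\<ge>N0. measure_pmf.prob (P \<nu>) {z. vnorm (bhat k p (N \<nu>) (y \<nu>) (X \<nu>) (m \<nu>) z - btarget k p (N \<nu>) (y \<nu>) (X \<nu>) (m \<nu>) (P \<nu>)) > B * sqrt (\<delta> \<nu>)} < \<epsilon>"
    proof (intro exI allI impI)
      fix \<nu> assume "\<nu> \<ge> N0"
      note h = N0[OF this]
      define n where "n = N \<nu>"
      have n: "n > 0" using h unfolding n_def by simp
      have np: "real n > 0" using n by simp
      define \<eta> where "\<eta> = \<tau> * sqrt (\<delta> \<nu>)"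
      have eta: "\<eta> \<ge> 0" unfolding \<eta>_def using taup dnn by simp
      have small: "real d * \<eta> \<le> \<kappa>/2"
      proof -
        have "real d * \<eta> = (real d * \<tau>) * sqrt (\<delta> \<nu>)" unfolding \<eta>_def by simp
        also have "\<dots> \<le> (real d * \<tau>) * (\<kappa> / (2 * real d * \<tau>))"
        proof (rule mult_left_mono)
          show "sqrt (\<delta> \<nu>) \<le> \<kappa> / (2 * real d * \<tau>)" using h by (simp add: less_imp_le)
          show "0 \<le> real d * \<tau>" using dpos taup by simp
        qed
        also have "\<dots> = \<kappa>/2" using dpos taup by (simp add: field_simps)
        finally show ?thesis .
      qed
      have pr: "\<forall>t<k*n. 0 < piP (P \<nu>) (t div n) (t mod n) \<and> piP (P \<nu>) (t div n) (t mod n) < 1"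
        using pi_range div_mod_lt unfolding n_def by blast
      have wc: "\<forall>t<k*n. m \<nu> (t div n) (t mod n) * piP (P \<nu>) (t div n) (t mod n) \<ge> c"
        using A5 div_mod_lt unfolding n_def by (meson less_imp_le)
      have wC: "\<forall>t<k*n. \<bar>m \<nu> (t div n) (t mod n) * piP (P \<nu>) (t div n) (t mod n)\<bar> \<le> C"
      proof (intro allI impI)
        fix t assume "t < k*n"
        then have "c < m \<nu> (t div n) (t mod n) * piP (P \<nu>) (t div n) (t mod n) \<and> m \<nu> (t div n) (t mod n) * piP (P \<nu>) (t div n) (t mod n) < C"
          using A5 div_mod_lt unfolding n_def by blast
        then show "\<bar>m \<nu> (t div n) (t mod n) * piP (P \<nu>) (t div n) (t mod n)\<bar> \<le> C" using A5_c by auto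
      qed
      have close: "\<forall>r<d. \<forall>s<d. \<bar>(\<Sum>t<k*n. xe k n (X \<nu>) r t * xe k n (X \<nu>) s t) / real n - M $$ (r,s)\<bar> \<le> \<eta>'"
      proof (intro allI impI)
        fix r s assume "r < d" "s < d"
        then have "(r,s) \<in> {..<d}\<times>{..<d}" by simp
        moreover have "\<forall>rs\<in>{..<d}\<times>{..<d}. \<bar>(\<Sum>t<k * N \<nu>. xe k (N \<nu>) (X \<nu>) (fst rs) t * xe k (N \<nu>) (X \<nu>) (snd rs) t) / real (N \<nu>) - M $$ (fst rs, snd rs)\<bar> < \<eta>'"
          using h by blast
        ultimately have "\<bar>(\<Sum>t<k * N \<nu>. xe k (N \<nu>) (X \<nu>) (fst (r,s)) t * xe k (N \<nu>) (X \<nu>) (snd (r,s)) t) / real (N \<nu>) - M $$ (fst (r,s), snd (r,s))\<bar> < \<eta>'"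
          by blast
        then show "\<bar>(\<Sum>t<k*n. xe k n (X \<nu>) r t * xe k n (X \<nu>) s t) / real n - M $$ (r,s)\<bar> \<le> \<eta>'"
          unfolding n_def by simp
      qed
      have kap: "\<forall>f. qf (k+p) (\<lambda>r s. (\<Sum>t<k*n. xe k n (X \<nu>) r t * (m \<nu> (t div n) (t mod n) * piP (P \<nu>) (t div n) (t mod n)) * xe k n (X \<nu>) s t) / real n) f \<ge> \<kappa> * nsq (k+p) f"
      proof
        fix f
        show "qf (k+p) (\<lambda>r s. (\<Sum>t<k*n. xe k n (X \<nu>) r t * (m \<nu> (t div n) (t mod n) * piP (P \<nu>) (t div n) (t mod n)) * xe k n (X \<nu>) s t) / real n) f \<ge> \<kappa> * nsq (k+p) f"
          unfolding \<kappa>_def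
          using gram_lower[where w="\<lambda>a i. m \<nu> a i * piP (P \<nu>) a i" and X="X \<nu>" and Mf="\<lambda>r s. M $$ (r,s)" and d=d, OF n wc _ close _ deta' mu(2)]
            A5_c eta'p unfolding d_def by simp
      qed
      have mx: "(\<Sum>s<p. \<Sum>i<n. (X \<nu> i s)^4) \<le> real n * C1"
      proof -
        have "(\<Sum>s<p. \<Sum>i<n. (X \<nu> i s)^4) / real n < C1" using momx unfolding n_def by blast
        then have "(\<Sum>s<p. \<Sum>i<n. (X \<nu> i s)^4) < C1 * real n" using np by (simp add: pos_divide_less_eq)
        then show ?thesis by (simp add: mult.commute)
      qed
      have my: "(\<Sum>a<k. \<Sum>i<n. (y \<nu> a i)^4) \<le> real n * C1"
      proof -
        have "(\<Sum>a<k. \<Sum>i<n. (y \<nu> a i)^4) / real n < C1" using momy unfolding n_def by blast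
        then have "(\<Sum>a<k. \<Sum>i<n. (y \<nu> a i)^4) < C1 * real n" using np by (simp add: pos_divide_less_eq)
        then show ?thesis by (simp add: mult.commute)
      qed
      have hb: "\<forall>r<k+p. \<bar>(\<Sum>t<k*n. xe k n (X \<nu>) r t * (m \<nu> (t div n) (t mod n) * piP (P \<nu>) (t div n) (t mod n)) * y \<nu> (t div n) (t mod n)) / real n\<bar> \<le> H"
        unfolding H_def using h_bound[where w="\<lambda>a i. m \<nu> a i * piP (P \<nu>) a i", OF n _ C0 wC mx my C1nn] by simp
      define UG where "UG = (\<Union>rs\<in>{..<d}\<times>{..<d}. {z. \<bar>Zs k n (P \<nu>) (uG k n (X \<nu>) (m \<nu>) (fst rs) (snd rs)) z\<bar> > \<eta>})"
      define Uh where "Uh = (\<Union>r\<in>{..<d}. {z. \<bar>Zs k n (P \<nu>) (uh k n (X \<nu>) (m \<nu>) (y \<nu>) r) z\<bar> > \<eta>})"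
      have sub: "{z. vnorm (bhat k p (N \<nu>) (y \<nu>) (X \<nu>) (m \<nu>) z - btarget k p (N \<nu>) (y \<nu>) (X \<nu>) (m \<nu>) (P \<nu>)) > B * sqrt (\<delta> \<nu>)} \<subseteq> UG \<union> Uh"
      proof
        fix z assume zin: "z \<in> {z. vnorm (bhat k p (N \<nu>) (y \<nu>) (X \<nu>) (m \<nu>) z - btarget k p (N \<nu>) (y \<nu>) (X \<nu>) (m \<nu>) (P \<nu>)) > B * sqrt (\<delta> \<nu>)}"
        show "z \<in> UG \<union> Uh"
        proof (rule ccontr)
          assume "z \<notin> UG \<union> Uh"
          then have zG: "\<forall>r<k+p. \<forall>s<k+p. \<bar>Zs k n (P \<nu>) (uG k n (X \<nu>) (m \<nu>) r s) z\<bar> \<le> \<eta>"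
            and zh: "\<forall>r<k+p. \<bar>Zs k n (P \<nu>) (uh k n (X \<nu>) (m \<nu>) (y \<nu>) r) z\<bar> \<le> \<eta>"
            unfolding UG_def Uh_def d_def by (auto simp: not_less)
          have "vnorm (bhat k p n (y \<nu>) (X \<nu>) (m \<nu>) z - btarget k p n (y \<nu>) (X \<nu>) (m \<nu>) (P \<nu>))
              \<le> 2 * \<eta> * (1 + real (k+p) * H / \<kappa>) * sqrt (real (k+p)) / \<kappa>"
            by (rule good_bound[OF n kap kp hb H0 zG zh eta]) (use small in \<open>simp add: d_def\<close>)
          also have "\<dots> = B * sqrt (\<delta> \<nu>)" unfolding B_def \<eta>_def d_def by simp
          finally show False using zin unfolding n_def by simp
        qed
      qed
      have chG: "measure_pmf.prob (P \<nu>) {z. \<bar>Zs k n (P \<nu>) (uG k n (X \<nu>) (m \<nu>) r s) z\<bar> > \<eta>} \<le> K / \<tau>^2"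
        if "r < d" "s < d" for r s
        unfolding \<eta>_def
        by (rule cheb[OF _ _ _ taup K, where Bd="(\<Sum>t<k*n. \<bar>uG k n (X \<nu>) (m \<nu>) r s t\<bar>) / real n"])
           (use Zs_bound[OF pr] var n that dnn in \<open>auto simp: n_def d_def\<close>)
      have chh: "measure_pmf.prob (P \<nu>) {z. \<bar>Zs k n (P \<nu>) (uh k n (X \<nu>) (m \<nu>) (y \<nu>) r) z\<bar> > \<eta>} \<le> K / \<tau>^2"
        if "r < d" for r
        unfolding \<eta>_def
        by (rule cheb[OF _ _ _ taup K, where Bd="(\<Sum>t<k*n. \<bar>uh k n (X \<nu>) (m \<nu>) (y \<nu>) r t\<bar>) / real n"])
           (use Zs_bound[OF pr] var n that dnn in \<open>auto simp: n_def d_def\<close>)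
      have pUG: "measure_pmf.prob (P \<nu>) UG \<le> real (d*d) * (K / \<tau>^2)"
      proof -
        have "measure_pmf.prob (P \<nu>) UG \<le> (\<Sum>rs\<in>{..<d}\<times>{..<d}. measure_pmf.prob (P \<nu>) {z. \<bar>Zs k n (P \<nu>) (uG k n (X \<nu>) (m \<nu>) (fst rs) (snd rs)) z\<bar> > \<eta>})"
          unfolding UG_def by (rule measure_UNION_le) auto
        also have "\<dots> \<le> of_nat (card ({..<d}\<times>{..<d})) * (K / \<tau>^2)"
          by (rule sum_bounded_above) (auto intro: chG)
        finally show ?thesis by (simp add: card_cartesian_product)
      qed
      have pUh: "measure_pmf.prob (P \<nu>) Uh \<le> real d * (K / \<tau>^2)"
      proof -
        have "measure_pmf.prob (P \<nu>) Uh \<le> (\<Sum>r\<in>{..<d}. measure_pmf.prob (P \<nu>) {z. \<bar>Zs k n (P \<nu>) (uh k n (X \<nu>) (m \<nu>) (y \<nu>) r) z\<bar> > \<eta>})"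
          unfolding Uh_def by (rule measure_UNION_le) auto
        also have "\<dots> \<le> of_nat (card {..<d}) * (K / \<tau>^2)"
          by (rule sum_bounded_above) (auto intro: chh)
        finally show ?thesis by simp
      qed
      have "measure_pmf.prob (P \<nu>) {z. vnorm (bhat k p (N \<nu>) (y \<nu>) (X \<nu>) (m \<nu>) z - btarget k p (N \<nu>) (y \<nu>) (X \<nu>) (m \<nu>) (P \<nu>)) > B * sqrt (\<delta> \<nu>)}
          \<le> measure_pmf.prob (P \<nu>) (UG \<union> Uh)"
        by (rule measure_pmf.finite_measure_mono[OF sub]) simp
      also have "\<dots> \<le> measure_pmf.prob (P \<nu>) UG + measure_pmf.prob (P \<nu>) Uh" by (rule measure_Un_le) simp_all
      also have "\<dots> \<le> J * K / \<tau>^2" using pUG pUh unfolding J_def by (simp add: algebra_simps add_divide_distrib)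
      also have "\<dots> \<le> J * K / \<tau>"
      proof (rule divide_left_mono)
        show "\<tau> \<le> \<tau>^2" using tau1 by (simp add: power2_eq_square)
      qed (use J0 K taup in auto)
      also have "\<dots> < \<epsilon>"
      proof -
        have "J * K < \<epsilon> * \<tau>" unfolding \<tau>_def using ep by (simp add: field_simps)
        then show ?thesis using taup by (simp add: pos_divide_less_eq)
      qed
      finally show "measure_pmf.prob (P \<nu>) {z. vnorm (bhat k p (N \<nu>) (y \<nu>) (X \<nu>) (m \<nu>) z - btarget k p (N \<nu>) (y \<nu>) (X \<nu>) (m \<nu>) (P \<nu>)) > B * sqrt (\<delta> \<nu>)} < \<epsilon>" .
    qed
  qed
qed

lemma Dmat_carrier: "Dmat k n Q \<in> carrier_mat (k*n) (k*n)"
  unfolding Dmat_def by simp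

lemma EZ_formula:
  fixes Q :: "(nat \<Rightarrow> nat) pmf"
  assumes pos: "\<forall>t<k*n. piP Q (t div n) (t mod n) > 0"
  shows "measure_pmf.expectation Q (\<lambda>z. (Zs k n Q u z)^2)
    = (\<Sum>t<k*n. \<Sum>t'<k*n. (u t * piP Q (t div n) (t mod n)) * Dmat k n Q $$ (t,t') * (u t' * piP Q (t' div n) (t' mod n))) / (real n)^2"
proof -
  have "(\<lambda>z. (Zs k n Q u z)^2) = (\<lambda>z. (\<Sum>t<k*n. u t * (Rind z (t div n) (t mod n) - piP Q (t div n) (t mod n)))^2 / (real n)^2)"
    unfolding Zs_def by (simp add: power_divide)
  then show ?thesis using var_formula[OF pos, of u] by simp
qed

lemma EZ_spec:
  fixes Q :: "(nat \<Rightarrow> nat) pmf"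
  assumes pos: "\<forall>t<k*n. piP Q (t div n) (t mod n) > 0"
  shows "measure_pmf.expectation Q (\<lambda>z. (Zs k n Q u z)^2)
    \<le> spec_norm (Dmat k n Q) * nsq (k*n) (\<lambda>t. u t * piP Q (t div n) (t mod n)) / (real n)^2"
  unfolding EZ_formula[OF pos]
  by (rule divide_right_mono[OF spec_bound[OF Dmat_carrier]]) simp

lemma EZ_l1:
  fixes Q :: "(nat \<Rightarrow> nat) pmf"
  assumes pos: "\<forall>t<k*n. piP Q (t div n) (t mod n) > 0"
    and F: "\<forall>t<k*n. \<bar>u t * piP Q (t div n) (t mod n)\<bar> \<le> F"
  shows "measure_pmf.expectation Q (\<lambda>z. (Zs k n Q u z)^2) \<le> F^2 * l1_norm (Dmat k n Q) / (real n)^2"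
  unfolding EZ_formula[OF pos]
  by (rule divide_right_mono[OF l1_bound[OF Dmat_carrier F]]) simp

lemma nsq_uG:
  fixes X m :: "nat \<Rightarrow> nat \<Rightarrow> real" and Q :: "(nat \<Rightarrow> nat) pmf"
  assumes r: "r < k+p" and s: "s < k+p"
    and wC: "\<forall>t<k*n. \<bar>m (t div n) (t mod n) * piP Q (t div n) (t mod n)\<bar> \<le> C"
    and mx: "(\<Sum>s<p. \<Sum>i<n. (X i s)^4) \<le> real n * C1" and C1: "C1 \<ge> 0"
  shows "nsq (k*n) (\<lambda>t. uG k n X m r s t * piP Q (t div n) (t mod n)) \<le> C^2 * (real k * real n * (1 + C1))"
proof -
  have "nsq (k*n) (\<lambda>t. uG k n X m r s t * piP Q (t div n) (t mod n))
     \<le> (\<Sum>t<k*n. C^2 * (((xe k n X r t)^4 + (xe k n X s t)^4) / 2))"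
    unfolding nsq_def
  proof (rule sum_mono)
    fix t assume "t \<in> {..<k*n}"
    then have w: "(m (t div n) (t mod n) * piP Q (t div n) (t mod n))^2 \<le> C^2" using wC sq_le_of_abs by blast
    have "(uG k n X m r s t * piP Q (t div n) (t mod n))^2 = (m (t div n) (t mod n) * piP Q (t div n) (t mod n))^2 * (xe k n X r t * xe k n X s t)^2"
      unfolding uG_def by (simp add: power_mult_distrib ac_simps)
    also have "\<dots> \<le> C^2 * (((xe k n X r t)^4 + (xe k n X s t)^4) / 2)"
      by (rule mult_mono[OF w sq2]) auto
    finally show "(uG k n X m r s t * piP Q (t div n) (t mod n))^2 \<le> C^2 * (((xe k n X r t)^4 + (xe k n X s t)^4) / 2)" .
  qed
  also have "\<dots> = C^2 * ((\<Sum>t<k*n. (xe k n X r t)^4) + (\<Sum>t<k*n. (xe k n X s t)^4)) / 2"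
    by (simp add: sum_distrib_left sum.distrib sum_divide_distrib[symmetric] algebra_simps)
  also have "\<dots> \<le> C^2 * (real k * real n * (1 + C1) + real k * real n * (1 + C1)) / 2"
    using S4x[OF r mx C1] S4x[OF s mx C1] by (intro divide_right_mono mult_left_mono add_mono) auto
  also have "\<dots> = C^2 * (real k * real n * (1 + C1))" by simp
  finally show ?thesis .
qed

lemma nsq_uh:
  fixes X y m :: "nat \<Rightarrow> nat \<Rightarrow> real" and Q :: "(nat \<Rightarrow> nat) pmf"
  assumes r: "r < k+p" and k: "k \<ge> 1"
    and wC: "\<forall>t<k*n. \<bar>m (t div n) (t mod n) * piP Q (t div n) (t mod n)\<bar> \<le> C"
    and mx: "(\<Sum>s<p. \<Sum>i<n. (X i s)^4) \<le> real n * C1"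
    and my: "(\<Sum>a<k. \<Sum>i<n. (y a i)^4) \<le> real n * C1" and C1: "C1 \<ge> 0"
  shows "nsq (k*n) (\<lambda>t. uh k n X m y r t * piP Q (t div n) (t mod n)) \<le> C^2 * (real k * real n * (1 + C1))"
proof -
  have "nsq (k*n) (\<lambda>t. uh k n X m y r t * piP Q (t div n) (t mod n))
     \<le> (\<Sum>t<k*n. C^2 * (((xe k n X r t)^4 + (y (t div n) (t mod n))^4) / 2))"
    unfolding nsq_def
  proof (rule sum_mono)
    fix t assume "t \<in> {..<k*n}"
    then have w: "(m (t div n) (t mod n) * piP Q (t div n) (t mod n))^2 \<le> C^2" using wC sq_le_of_abs by blast
    have "(uh k n X m y r t * piP Q (t div n) (t mod n))^2 = (m (t div n) (t mod n) * piP Q (t div n) (t mod n))^2 * (xe k n X r t * y (t div n) (t mod n))^2"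
      unfolding uh_def by (simp add: power_mult_distrib ac_simps)
    also have "\<dots> \<le> C^2 * (((xe k n X r t)^4 + (y (t div n) (t mod n))^4) / 2)"
      by (rule mult_mono[OF w sq2]) auto
    finally show "(uh k n X m y r t * piP Q (t div n) (t mod n))^2 \<le> C^2 * (((xe k n X r t)^4 + (y (t div n) (t mod n))^4) / 2)" .
  qed
  also have "\<dots> = C^2 * ((\<Sum>t<k*n. (xe k n X r t)^4) + (\<Sum>t<k*n. (y (t div n) (t mod n))^4)) / 2"
    by (simp add: sum_distrib_left sum.distrib sum_divide_distrib[symmetric] algebra_simps)
  also have "\<dots> \<le> C^2 * (real k * real n * (1 + C1) + real k * real n * (1 + C1)) / 2"
  proof -
    have a: "(\<Sum>t<k*n. (xe k n X r t)^4) \<le> real k * real n * (1 + C1)" by (rule S4x[OF r mx C1])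
    have "(\<Sum>t<k*n. (y (t div n) (t mod n))^4) \<le> real n * C1" using S4y[where y=y and k=k and n=n] my by simp
    also have "\<dots> \<le> real k * real n * (1 + C1)"
    proof -
      have "real n * C1 \<le> real n * (1 + C1)" by (simp add: mult_left_mono)
      also have "\<dots> \<le> real k * (real n * (1 + C1))"
      proof -
        have "1 * (real n * (1 + C1)) \<le> real k * (real n * (1 + C1))" by (rule mult_right_mono) (use k C1 in auto)
        then show ?thesis by simp
      qed
      finally show ?thesis by (simp add: ac_simps)
    qed
    finally show ?thesis using a by (intro divide_right_mono mult_left_mono add_mono) auto
  qed
  also have "\<dots> = C^2 * (real k * real n * (1 + C1))" by simp
  finally show ?thesis .
qed

lemma xe_bound:
  assumes r: "r < k+p" and t: "t < k*n" and XB: "\<forall>s i. s < p \<longrightarrow> i < n \<longrightarrow> \<bar>X i s\<bar> \<le> B"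
  shows "\<bar>xe k n X r t\<bar> \<le> max 1 B"
proof (cases "r < k")
  case True then show ?thesis unfolding xe_def by auto
next
  case False
  have "t mod n < n" using div_mod_lt[OF t] by simp
  moreover have "r - k < p" using r False by simp
  ultimately have "\<bar>X (t mod n) (r - k)\<bar> \<le> B" using XB by blast
  then show ?thesis unfolding xe_def using False by auto
qed

lemma pow4_bound: "\<bar>a::real\<bar> \<le> b \<Longrightarrow> a^4 \<le> b^4"
proof -
  assume h: "\<bar>a\<bar> \<le> b"
  have "\<bar>a\<bar>^4 \<le> b^4" by (rule power_mono[OF h]) simp
  moreover have "\<bar>a\<bar>^4 = a^4" by (rule power_even_abs) simp
  ultimately show ?thesis by simp
qed

theorem mainTheorem12:
  fixes k p :: nat
    and N :: "nat \<Rightarrow> nat"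
    and y :: "nat \<Rightarrow> nat \<Rightarrow> nat \<Rightarrow> real"
    and X :: "nat \<Rightarrow> nat \<Rightarrow> nat \<Rightarrow> real"
    and m :: "nat \<Rightarrow> nat \<Rightarrow> nat \<Rightarrow> real"
    and P :: "nat \<Rightarrow> (nat \<Rightarrow> nat) pmf"
    and M :: "real Matrix.mat"
    and c C :: real
  assumes k_pos: "k \<ge> 1"
    and N_lim: "filterlim N at_top sequentially"
    and design: "\<And>\<nu> z i. z \<in> set_pmf (P \<nu>) \<Longrightarrow> i < N \<nu> \<Longrightarrow> z i < k"
    and pi_range: "\<And>\<nu> a i. a < k \<Longrightarrow> i < N \<nu> \<Longrightarrow>
                     0 < piP (P \<nu>) a i \<and> piP (P \<nu>) a i < 1"
    and m_pos: "\<And>\<nu> a i. a < k \<Longrightarrow> i < N \<nu> \<Longrightarrow> m \<nu> a i > 0"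
    and A2_dim: "M \<in> carrier_mat (k+p) (k+p)"
    and A2_pd: "pos_def_mat M"
    and A2_lim: "\<And>r s. r < k+p \<Longrightarrow> s < k+p \<Longrightarrow>
       ((\<lambda>\<nu>. (transpose_mat (design_x k p (N \<nu>) (X \<nu>)) * design_x k p (N \<nu>) (X \<nu>)) $$ (r,s)
               / real (N \<nu>)) \<longlongrightarrow> M $$ (r,s)) sequentially"
    and A5_c: "0 < c" and A5_cC: "c < C"
    and A5: "\<And>\<nu> a i. a < k \<Longrightarrow> i < N \<nu> \<Longrightarrow>
               c < m \<nu> a i * piP (P \<nu>) a i \<and> m \<nu> a i * piP (P \<nu>) a i < C"
  shows
   "((\<exists>C1. \<forall>\<nu>. (\<Sum>a<k. \<Sum>i<N \<nu>. (y \<nu> a i)^4) / real (N \<nu>) < C1 \<and>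
                (\<Sum>s<p. \<Sum>i<N \<nu>. (X \<nu> i s)^4) / real (N \<nu>) < C1) \<longrightarrow>
     ((\<lambda>\<nu>. spec_norm (Dmat k (N \<nu>) (P \<nu>)) / real (N \<nu>)) \<longlongrightarrow> 0) sequentially \<longrightarrow>
     bigO_p P (\<lambda>\<nu> z. bhat k p (N \<nu>) (y \<nu>) (X \<nu>) (m \<nu>) z
                      - btarget k p (N \<nu>) (y \<nu>) (X \<nu>) (m \<nu>) (P \<nu>))
        (\<lambda>\<nu>. sqrt (spec_norm (Dmat k (N \<nu>) (P \<nu>)) / real (N \<nu>))))
  \<and>
    ((\<exists>B. (\<forall>\<nu> a i. a < k \<longrightarrow> i < N \<nu> \<longrightarrow> \<bar>y \<nu> a i\<bar> \<le> B) \<and>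
          (\<forall>\<nu> s i. s < p \<longrightarrow> i < N \<nu> \<longrightarrow> \<bar>X \<nu> i s\<bar> \<le> B)) \<longrightarrow>
     ((\<lambda>\<nu>. l1_norm (Dmat k (N \<nu>) (P \<nu>)) / real (N \<nu>) / real (N \<nu>)) \<longlongrightarrow> 0) sequentially \<longrightarrow>
     bigO_p P (\<lambda>\<nu> z. bhat k p (N \<nu>) (y \<nu>) (X \<nu>) (m \<nu>) z
                      - btarget k p (N \<nu>) (y \<nu>) (X \<nu>) (m \<nu>) (P \<nu>))
        (\<lambda>\<nu>. sqrt (l1_norm (Dmat k (N \<nu>) (P \<nu>)) / real (N \<nu>) / real (N \<nu>))))"
proof (intro conjI impI)
  assume A1: "\<exists>C1. \<forall>\<nu>. (\<Sum>a<k. \<Sum>i<N \<nu>. (y \<nu> a i)^4) / real (N \<nu>) < C1 \<and>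
                (\<Sum>s<p. \<Sum>i<N \<nu>. (X \<nu> i s)^4) / real (N \<nu>) < C1"
    and lim1: "((\<lambda>\<nu>. spec_norm (Dmat k (N \<nu>) (P \<nu>)) / real (N \<nu>)) \<longlongrightarrow> 0) sequentially"
  obtain C1 where C1: "\<forall>\<nu>. (\<Sum>a<k. \<Sum>i<N \<nu>. (y \<nu> a i)^4) / real (N \<nu>) < C1 \<and>
                (\<Sum>s<p. \<Sum>i<N \<nu>. (X \<nu> i s)^4) / real (N \<nu>) < C1" using A1 by blast
  have C1nn: "C1 \<ge> 0"
  proof -
    have "0 \<le> (\<Sum>a<k. \<Sum>i<N 0. (y 0 a i)^4) / real (N 0)" by (intro divide_nonneg_nonneg sum_nonneg) auto
    then show ?thesis using C1 by (metis less_eq_real_def order_trans)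
  qed
  have C0: "C \<ge> 0" using A5_c A5_cC by simp
  define K where "K = C^2 * (real k * (1 + C1))"
  show "bigO_p P (\<lambda>\<nu> z. bhat k p (N \<nu>) (y \<nu>) (X \<nu>) (m \<nu>) z
                      - btarget k p (N \<nu>) (y \<nu>) (X \<nu>) (m \<nu>) (P \<nu>))
        (\<lambda>\<nu>. sqrt (spec_norm (Dmat k (N \<nu>) (P \<nu>)) / real (N \<nu>)))"
  proof -
    have f1: "\<forall>\<nu>. (\<Sum>a<k. \<Sum>i<N \<nu>. (y \<nu> a i)^4) / real (N \<nu>) < C1" using C1 by blast
    have f2: "\<forall>\<nu>. (\<Sum>s<p. \<Sum>i<N \<nu>. (X \<nu> i s)^4) / real (N \<nu>) < C1" using C1 by blast
    have f3: "\<forall>\<nu>. spec_norm (Dmat k (N \<nu>) (P \<nu>)) / real (N \<nu>) \<ge> 0"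
      using spec_ok(1)[OF Dmat_carrier] by simp
    have f4: "((\<lambda>\<nu>. spec_norm (Dmat k (N \<nu>) (P \<nu>)) / real (N \<nu>)) \<longlongrightarrow> 0) sequentially" by (rule lim1)
    have f5: "K \<ge> 0" unfolding K_def using C1nn by simp
    have f6: "\<forall>\<nu>. N \<nu> > 0 \<longrightarrow>
       (\<forall>r<k+p. \<forall>s<k+p. measure_pmf.expectation (P \<nu>) (\<lambda>z. (Zs k (N \<nu>) (P \<nu>) (uG k (N \<nu>) (X \<nu>) (m \<nu>) r s) z)^2) \<le> K * (spec_norm (Dmat k (N \<nu>) (P \<nu>)) / real (N \<nu>))) \<and>
       (\<forall>r<k+p. measure_pmf.expectation (P \<nu>) (\<lambda>z. (Zs k (N \<nu>) (P \<nu>) (uh k (N \<nu>) (X \<nu>) (m \<nu>) (y \<nu>) r) z)^2) \<le> K * (spec_norm (Dmat k (N \<nu>) (P \<nu>)) / real (N \<nu>)))"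
    proof (intro allI impI, rule conjI)
      fix \<nu> assume n0: "N \<nu> > 0"
      define n where "n = N \<nu>"
      have n: "n > 0" using n0 unfolding n_def .
      have np: "real n > 0" using n by simp
      define S where "S = spec_norm (Dmat k n (P \<nu>))"
      have S0: "S \<ge> 0" unfolding S_def by (rule spec_ok(1)[OF Dmat_carrier])
      have pos: "\<forall>t<k*n. piP (P \<nu>) (t div n) (t mod n) > 0"
        using pi_range div_mod_lt unfolding n_def by blast
      have wC: "\<forall>t<k*n. \<bar>m \<nu> (t div n) (t mod n) * piP (P \<nu>) (t div n) (t mod n)\<bar> \<le> C"
      proof (intro allI impI)
        fix t assume "t < k*n"
        then have "c < m \<nu> (t div n) (t mod n) * piP (P \<nu>) (t div n) (t mod n) \<and> m \<nu> (t div n) (t mod n) * piP (P \<nu>) (t div n) (t mod n) < C"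
          using A5 div_mod_lt unfolding n_def by blast
        then show "\<bar>m \<nu> (t div n) (t mod n) * piP (P \<nu>) (t div n) (t mod n)\<bar> \<le> C" using A5_c by auto
      qed
      have mx: "(\<Sum>s<p. \<Sum>i<n. (X \<nu> i s)^4) \<le> real n * C1"
      proof -
        have "(\<Sum>s<p. \<Sum>i<n. (X \<nu> i s)^4) / real n < C1" using C1 unfolding n_def by blast
        then have "(\<Sum>s<p. \<Sum>i<n. (X \<nu> i s)^4) < C1 * real n" using np by (simp add: pos_divide_less_eq)
        then show ?thesis by (simp add: mult.commute)
      qed
      have my: "(\<Sum>a<k. \<Sum>i<n. (y \<nu> a i)^4) \<le> real n * C1"
      proof -
        have "(\<Sum>a<k. \<Sum>i<n. (y \<nu> a i)^4) / real n < C1" using C1 unfolding n_def by blast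
        then have "(\<Sum>a<k. \<Sum>i<n. (y \<nu> a i)^4) < C1 * real n" using np by (simp add: pos_divide_less_eq)
        then show ?thesis by (simp add: mult.commute)
      qed
      have fin: "S * (C^2 * (real k * real n * (1 + C1))) / (real n)^2 = K * (S / real n)"
        unfolding K_def using np by (simp add: field_simps power2_eq_square)
      have key: "S * Nq / (real n)^2 \<le> K * (S / real n)" if "Nq \<le> C^2 * (real k * real n * (1 + C1))" for Nq
      proof -
        have "S * Nq / (real n)^2 \<le> S * (C^2 * (real k * real n * (1 + C1))) / (real n)^2"
          using that S0 by (intro divide_right_mono mult_left_mono) auto
        then show ?thesis unfolding fin .
      qed
      show "\<forall>r<k+p. \<forall>s<k+p. measure_pmf.expectation (P \<nu>) (\<lambda>z. (Zs k (N \<nu>) (P \<nu>) (uG k (N \<nu>) (X \<nu>) (m \<nu>) r s) z)^2) \<le> K * (spec_norm (Dmat k (N \<nu>) (P \<nu>)) / real (N \<nu>))"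
      proof (intro allI impI)
        fix r s assume r: "r < k+p" and s: "s < k+p"
        have "measure_pmf.expectation (P \<nu>) (\<lambda>z. (Zs k n (P \<nu>) (uG k n (X \<nu>) (m \<nu>) r s) z)^2)
           \<le> S * nsq (k*n) (\<lambda>t. uG k n (X \<nu>) (m \<nu>) r s t * piP (P \<nu>) (t div n) (t mod n)) / (real n)^2"
          unfolding S_def by (rule EZ_spec[OF pos])
        also have "\<dots> \<le> K * (S / real n)" by (rule key[OF nsq_uG[OF r s wC mx C1nn]])
        finally show "measure_pmf.expectation (P \<nu>) (\<lambda>z. (Zs k (N \<nu>) (P \<nu>) (uG k (N \<nu>) (X \<nu>) (m \<nu>) r s) z)^2) \<le> K * (spec_norm (Dmat k (N \<nu>) (P \<nu>)) / real (N \<nu>))"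
          unfolding S_def n_def .
      qed
      show "\<forall>r<k+p. measure_pmf.expectation (P \<nu>) (\<lambda>z. (Zs k (N \<nu>) (P \<nu>) (uh k (N \<nu>) (X \<nu>) (m \<nu>) (y \<nu>) r) z)^2) \<le> K * (spec_norm (Dmat k (N \<nu>) (P \<nu>)) / real (N \<nu>))"
      proof (intro allI impI)
        fix r assume r: "r < k+p"
        have "measure_pmf.expectation (P \<nu>) (\<lambda>z. (Zs k n (P \<nu>) (uh k n (X \<nu>) (m \<nu>) (y \<nu>) r) z)^2)
           \<le> S * nsq (k*n) (\<lambda>t. uh k n (X \<nu>) (m \<nu>) (y \<nu>) r t * piP (P \<nu>) (t div n) (t mod n)) / (real n)^2"
          unfolding S_def by (rule EZ_spec[OF pos])
        also have "\<dots> \<le> K * (S / real n)" by (rule key[OF nsq_uh[OF r k_pos wC mx my C1nn]])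
        finally show "measure_pmf.expectation (P \<nu>) (\<lambda>z. (Zs k (N \<nu>) (P \<nu>) (uh k (N \<nu>) (X \<nu>) (m \<nu>) (y \<nu>) r) z)^2) \<le> K * (spec_norm (Dmat k (N \<nu>) (P \<nu>)) / real (N \<nu>))"
          unfolding S_def n_def .
      qed
    qed
    show ?thesis by (rule core_main[OF k_pos N_lim pi_range A2_dim A2_pd A2_lim A5_c A5_cC A5 f1 f2 f3 f4 f5 f6])
  qed
next
  assume A1': "\<exists>B. (\<forall>\<nu> a i. a < k \<longrightarrow> i < N \<nu> \<longrightarrow> \<bar>y \<nu> a i\<bar> \<le> B) \<and>
          (\<forall>\<nu> s i. s < p \<longrightarrow> i < N \<nu> \<longrightarrow> \<bar>X \<nu> i s\<bar> \<le> B)"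
    and lim2: "((\<lambda>\<nu>. l1_norm (Dmat k (N \<nu>) (P \<nu>)) / real (N \<nu>) / real (N \<nu>)) \<longlongrightarrow> 0) sequentially"
  obtain B where By: "\<forall>\<nu> a i. a < k \<longrightarrow> i < N \<nu> \<longrightarrow> \<bar>y \<nu> a i\<bar> \<le> B"
    and BX: "\<forall>\<nu> s i. s < p \<longrightarrow> i < N \<nu> \<longrightarrow> \<bar>X \<nu> i s\<bar> \<le> B" using A1' by blast
  define Bx where "Bx = max 1 B"
  have Bx1: "Bx \<ge> 1" and BBx: "B \<le> Bx" unfolding Bx_def by auto
  define C1 where "C1 = real k * Bx^4 + real p * Bx^4 + 1"
  have C0: "C \<ge> 0" using A5_c A5_cC by simp
  have Bx4: "Bx^4 \<ge> 0" by simp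
  have mom: "(\<Sum>a<k. \<Sum>i<N \<nu>. (y \<nu> a i)^4) / real (N \<nu>) < C1 \<and>
                (\<Sum>s<p. \<Sum>i<N \<nu>. (X \<nu> i s)^4) / real (N \<nu>) < C1" for \<nu>
  proof (cases "N \<nu> = 0")
    case True
    have "real k * Bx^4 \<ge> 0" "real p * Bx^4 \<ge> 0" by simp_all
    then have "0 < C1" unfolding C1_def by linarith
    then show ?thesis using True by simp
  next
    case False
    then have np: "real (N \<nu>) > 0" by simp
    have "(\<Sum>a<k. \<Sum>i<N \<nu>. (y \<nu> a i)^4) \<le> (\<Sum>a<k. \<Sum>i<N \<nu>. Bx^4)"
      using By BBx by (intro sum_mono pow4_bound) (auto intro: order_trans)
    also have "\<dots> = real (N \<nu>) * (real k * Bx^4)" by simp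
    finally have a: "(\<Sum>a<k. \<Sum>i<N \<nu>. (y \<nu> a i)^4) / real (N \<nu>) \<le> real k * Bx^4"
      using np by (simp add: pos_divide_le_eq mult.commute)
    have "(\<Sum>s<p. \<Sum>i<N \<nu>. (X \<nu> i s)^4) \<le> (\<Sum>s<p. \<Sum>i<N \<nu>. Bx^4)"
      using BX BBx by (intro sum_mono pow4_bound) (auto intro: order_trans)
    also have "\<dots> = real (N \<nu>) * (real p * Bx^4)" by simp
    finally have b: "(\<Sum>s<p. \<Sum>i<N \<nu>. (X \<nu> i s)^4) / real (N \<nu>) \<le> real p * Bx^4"
      using np by (simp add: pos_divide_le_eq mult.commute)
    have "real k * Bx^4 \<ge> 0" "real p * Bx^4 \<ge> 0" by simp_all
    then show ?thesis using a b unfolding C1_def by linarith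
  qed
  define F where "F = C * Bx^2"
  define K where "K = F^2"
  show "bigO_p P (\<lambda>\<nu> z. bhat k p (N \<nu>) (y \<nu>) (X \<nu>) (m \<nu>) z
                      - btarget k p (N \<nu>) (y \<nu>) (X \<nu>) (m \<nu>) (P \<nu>))
        (\<lambda>\<nu>. sqrt (l1_norm (Dmat k (N \<nu>) (P \<nu>)) / real (N \<nu>) / real (N \<nu>)))"
  proof -
    have f1: "\<forall>\<nu>. (\<Sum>a<k. \<Sum>i<N \<nu>. (y \<nu> a i)^4) / real (N \<nu>) < C1" using mom by blast
    have f2: "\<forall>\<nu>. (\<Sum>s<p. \<Sum>i<N \<nu>. (X \<nu> i s)^4) / real (N \<nu>) < C1" using mom by blast
    have f3: "\<forall>\<nu>. l1_norm (Dmat k (N \<nu>) (P \<nu>)) / real (N \<nu>) / real (N \<nu>) \<ge> 0"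
      unfolding l1_norm_def by (simp add: sum_nonneg)
    have f4: "((\<lambda>\<nu>. l1_norm (Dmat k (N \<nu>) (P \<nu>)) / real (N \<nu>) / real (N \<nu>)) \<longlongrightarrow> 0) sequentially" by (rule lim2)
    have f5: "K \<ge> 0" unfolding K_def by simp
    have f6: "\<forall>\<nu>. N \<nu> > 0 \<longrightarrow>
       (\<forall>r<k+p. \<forall>s<k+p. measure_pmf.expectation (P \<nu>) (\<lambda>z. (Zs k (N \<nu>) (P \<nu>) (uG k (N \<nu>) (X \<nu>) (m \<nu>) r s) z)^2) \<le> K * (l1_norm (Dmat k (N \<nu>) (P \<nu>)) / real (N \<nu>) / real (N \<nu>))) \<and>
       (\<forall>r<k+p. measure_pmf.expectation (P \<nu>) (\<lambda>z. (Zs k (N \<nu>) (P \<nu>) (uh k (N \<nu>) (X \<nu>) (m \<nu>) (y \<nu>) r) z)^2) \<le> K * (l1_norm (Dmat k (N \<nu>) (P \<nu>)) / real (N \<nu>) / real (N \<nu>)))"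
    proof (intro allI impI, rule conjI)
      fix \<nu> assume n0: "N \<nu> > 0"
      define n where "n = N \<nu>"
      have n: "n > 0" using n0 unfolding n_def .
      have pos: "\<forall>t<k*n. piP (P \<nu>) (t div n) (t mod n) > 0"
        using pi_range div_mod_lt unfolding n_def by blast
      have wC: "\<bar>m \<nu> (t div n) (t mod n) * piP (P \<nu>) (t div n) (t mod n)\<bar> \<le> C" if "t < k*n" for t
      proof -
        have "c < m \<nu> (t div n) (t mod n) * piP (P \<nu>) (t div n) (t mod n) \<and> m \<nu> (t div n) (t mod n) * piP (P \<nu>) (t div n) (t mod n) < C"
          using A5 div_mod_lt[OF that] unfolding n_def by blast
        then show ?thesis using A5_c by auto
      qed
      have XB: "\<forall>s i. s < p \<longrightarrow> i < n \<longrightarrow> \<bar>X \<nu> i s\<bar> \<le> B" using BX unfolding n_def by blast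
      have xb: "\<bar>xe k n (X \<nu>) r t\<bar> \<le> Bx" if "r < k+p" "t < k*n" for r t
        unfolding Bx_def by (rule xe_bound[OF that XB])
      have yb: "\<bar>y \<nu> (t div n) (t mod n)\<bar> \<le> Bx" if "t < k*n" for t
        using By div_mod_lt[OF that] BBx unfolding n_def by (meson order_trans)
      have eq: "F^2 * l1_norm (Dmat k n (P \<nu>)) / (real n)^2 = K * (l1_norm (Dmat k n (P \<nu>)) / real n / real n)"
        unfolding K_def by (simp add: power2_eq_square)
      show "\<forall>r<k+p. \<forall>s<k+p. measure_pmf.expectation (P \<nu>) (\<lambda>z. (Zs k (N \<nu>) (P \<nu>) (uG k (N \<nu>) (X \<nu>) (m \<nu>) r s) z)^2) \<le> K * (l1_norm (Dmat k (N \<nu>) (P \<nu>)) / real (N \<nu>) / real (N \<nu>))"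
      proof (intro allI impI)
        fix r s assume r: "r < k+p" and s: "s < k+p"
        have F: "\<forall>t<k*n. \<bar>uG k n (X \<nu>) (m \<nu>) r s t * piP (P \<nu>) (t div n) (t mod n)\<bar> \<le> F"
        proof (intro allI impI)
          fix t assume t: "t < k*n"
          have "\<bar>uG k n (X \<nu>) (m \<nu>) r s t * piP (P \<nu>) (t div n) (t mod n)\<bar>
              = \<bar>m \<nu> (t div n) (t mod n) * piP (P \<nu>) (t div n) (t mod n)\<bar> * (\<bar>xe k n (X \<nu>) r t\<bar> * \<bar>xe k n (X \<nu>) s t\<bar>)"
            unfolding uG_def by (simp add: abs_mult ac_simps)
          also have "\<dots> \<le> C * (Bx * Bx)"
            using wC[OF t] xb[OF r t] xb[OF s t] C0 by (intro mult_mono) auto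
          finally show "\<bar>uG k n (X \<nu>) (m \<nu>) r s t * piP (P \<nu>) (t div n) (t mod n)\<bar> \<le> F"
            unfolding F_def by (simp add: power2_eq_square)
        qed
        show "measure_pmf.expectation (P \<nu>) (\<lambda>z. (Zs k (N \<nu>) (P \<nu>) (uG k (N \<nu>) (X \<nu>) (m \<nu>) r s) z)^2) \<le> K * (l1_norm (Dmat k (N \<nu>) (P \<nu>)) / real (N \<nu>) / real (N \<nu>))"
          using EZ_l1[OF pos F] eq unfolding n_def by simp
      qed
      show "\<forall>r<k+p. measure_pmf.expectation (P \<nu>) (\<lambda>z. (Zs k (N \<nu>) (P \<nu>) (uh k (N \<nu>) (X \<nu>) (m \<nu>) (y \<nu>) r) z)^2) \<le> K * (l1_norm (Dmat k (N \<nu>) (P \<nu>)) / real (N \<nu>) / real (N \<nu>))"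
      proof (intro allI impI)
        fix r assume r: "r < k+p"
        have F: "\<forall>t<k*n. \<bar>uh k n (X \<nu>) (m \<nu>) (y \<nu>) r t * piP (P \<nu>) (t div n) (t mod n)\<bar> \<le> F"
        proof (intro allI impI)
          fix t assume t: "t < k*n"
          have "\<bar>uh k n (X \<nu>) (m \<nu>) (y \<nu>) r t * piP (P \<nu>) (t div n) (t mod n)\<bar>
              = \<bar>m \<nu> (t div n) (t mod n) * piP (P \<nu>) (t div n) (t mod n)\<bar> * (\<bar>xe k n (X \<nu>) r t\<bar> * \<bar>y \<nu> (t div n) (t mod n)\<bar>)"
            unfolding uh_def by (simp add: abs_mult ac_simps)
          also have "\<dots> \<le> C * (Bx * Bx)"
            using wC[OF t] xb[OF r t] yb[OF t] C0 by (intro mult_mono) auto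
          finally show "\<bar>uh k n (X \<nu>) (m \<nu>) (y \<nu>) r t * piP (P \<nu>) (t div n) (t mod n)\<bar> \<le> F"
            unfolding F_def by (simp add: power2_eq_square)
        qed
        show "measure_pmf.expectation (P \<nu>) (\<lambda>z. (Zs k (N \<nu>) (P \<nu>) (uh k (N \<nu>) (X \<nu>) (m \<nu>) (y \<nu>) r) z)^2) \<le> K * (l1_norm (Dmat k (N \<nu>) (P \<nu>)) / real (N \<nu>) / real (N \<nu>))"
          using EZ_l1[OF pos F] eq unfolding n_def by simp
      qed
    qed
    show ?thesis by (rule core_main[OF k_pos N_lim pi_range A2_dim A2_pd A2_lim A5_c A5_cC A5 f1 f2 f3 f4 f5 f6])
  qed
qed

end
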